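(* Let $u$ be a sufficiently regular function and $H=(H^{\alpha\beta})$ a sufficiently regular symmetric 2-tensor field on $\mathcal{K}_{[s_0,s_1]}$. Let $I$ be a multi-index with values in $\{0,1,2\}$, $J$ a multi-index with values in $\{1,2\}$, $p=|I|+|J|$, $k=|J|$. Then, with a constant $C$ determined by $I,J$, $$\big|[\partial^IL^J,\underline{H}(\partial\partial,\partial)]u\big|\le Ct^{-1}\sum_{p_1+p_2=p,\ p_1<p\atop k_1+k_2=k}|\partial u|_{p_1+1,k_1+1}|H|_{p_2,k_2}+Ct^{-1}|H|\,|\partial u|_{p,k},$$ where $[\partial^IL^J,\underline{H}(\partial\partial,\partial)]u:=\partial^IL^J\big(\underline{H}(\partial\partial,\partial)u\big)-\underline{H}(\partial\partial,\partial)\big(\partial^IL^Ju\big)$.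
   Context: Coordinates $(t,x)=(x^0,x^1,x^2)$, $r=|x|$, $s=\sqrt{t^2-r^2}$, $\partial_0=\partial_t$, summation over repeated indices. $\mathcal{K}_{[s_0,s_1]}=\{(t,x): t>r+1,\ s_0^2\le t^2-r^2\le s_1^2\}$. Boosts $L_a=x^a\partial_t+t\partial_a$; $\partial^I=\partial_{i_1}\cdots\partial_{i_m}$, $L^J=L_{j_1}\cdots L_{j_n}$. Semi-hyperboloidal frame $\underline{\partial}_0=\partial_t$, $\underline{\partial}_a=(x^a/t)\partial_t+\partial_a$; $\partial_\alpha=\underline{\Psi}_\alpha^\beta\underline{\partial}_\beta$ with $\underline{\Psi}_0^0=1$, $\underline{\Psi}_a^0=-x^a/t$, $\underline{\Psi}_0^b=0$, $\underline{\Psi}_a^b=\delta_a^b$; $\underline{H}^{\alpha\beta}:=H^{\alpha'\beta'}\underline{\Psi}_{\alpha'}^\alpha\underline{\Psi}_{\beta'}^\beta$. Define $\underline{H}(\partial\partial,\partial)w:=\sum_{(\alpha,\beta)\ne(0,0)}\underline{H}^{\alpha\beta}\underline{\partial}_\alpha\underline{\partial}_\beta w+H^{\alpha\beta}\partial_\alpha(\underline{\Psi}_\beta^{\beta'})\underline{\partial}_{\beta'}w$. For a function $w$: $|w|_{p,k}:=\max|Z^Kw|$ over all operators $Z^K$ that are compositions, in any order, of $i$ partial derivatives $\partial_\alpha$ and $j$ boosts $L_a$ with $i+j\le p$, $j\le k$; $|\partial w|_{p,k}:=\max_\alpha|\partial_\alpha w|_{p,k}$; $|H|_{p,k}:=\max_{\alpha,\beta}|H^{\alpha\beta}|_{p,k}$;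 $|H|:=\max_{\alpha,\beta}|H^{\alpha\beta}|$. *)

theory Defs
  imports "HOL-Analysis.Analysis"
begin

text \<open>Spacetime points (t, x1, x2) in R^{1+2}; scalar fields on them.\<close>
type_synonym pt = "real \<times> real \<times> real"
type_synonym fn = "pt \<Rightarrow> real"

definition crd :: "nat \<Rightarrow> pt \<Rightarrow> real" where
  "crd a q = (if a = 0 then fst q else if a = 1 then fst (snd q) else snd (snd q))"

definition ev :: "nat \<Rightarrow> pt" where
  "ev a = (if a = 0 then (1,0,0) else if a = 1 then (0,1,0) else if a = 2 then (0,0,1) else 0)"

definition dpart :: "nat \<Rightarrow> fn \<Rightarrow> fn" where
  "dpart a f = (\<lambda>q. deriv (\<lambda>h. f (q + h *\<^sub>R ev a)) 0)"

definition dparts :: "nat list \<Rightarrow> fn \<Rightarrow> fn" where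
  "dparts ds f = foldr dpart ds f"

definition boost :: "nat \<Rightarrow> fn \<Rightarrow> fn" where
  "boost a f = (\<lambda>q. crd a q * dpart 0 f q + crd 0 q * dpart a f q)"

definition boosts :: "nat list \<Rightarrow> fn \<Rightarrow> fn" where
  "boosts js f = foldr boost js f"

text \<open>C^\<infinity> regularity on U: all iterated partial derivatives are (Frechet) differentiable on U.\<close>
definition smooth_on :: "pt set \<Rightarrow> fn \<Rightarrow> bool" where
  "smooth_on U f \<longleftrightarrow> (\<forall>ds. set ds \<subseteq> {0,1,2} \<longrightarrow> dparts ds f differentiable_on U)"

definition Kset :: "real \<Rightarrow> real \<Rightarrow> pt set" where
  "Kset s0 s1 = {q. crd 0 q > sqrt (crd 1 q ^ 2 + crd 2 q ^ 2) + 1 \<and>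
      s0 ^ 2 \<le> crd 0 q ^ 2 - (crd 1 q ^ 2 + crd 2 q ^ 2) \<and>
      crd 0 q ^ 2 - (crd 1 q ^ 2 + crd 2 q ^ 2) \<le> s1 ^ 2}"

datatype zop = Dz nat | Lz nat

fun zapp :: "zop \<Rightarrow> fn \<Rightarrow> fn" where
  "zapp (Dz a) f = dpart a f"
| "zapp (Lz a) f = boost a f"

fun is_Lz :: "zop \<Rightarrow> bool" where
  "is_Lz (Dz a) = False"
| "is_Lz (Lz a) = True"

definition zapps :: "zop list \<Rightarrow> fn \<Rightarrow> fn" where
  "zapps zs f = foldr zapp zs f"

definition ZK :: "nat \<Rightarrow> nat \<Rightarrow> zop list set" where
  "ZK p k = {zs. set zs \<subseteq> {Dz 0, Dz 1, Dz 2, Lz 1, Lz 2} \<and> length zs \<le> p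
                 \<and> length (filter is_Lz zs) \<le> k}"

definition znorm :: "nat \<Rightarrow> nat \<Rightarrow> fn \<Rightarrow> pt \<Rightarrow> real" where
  "znorm p k w q = Max ((\<lambda>zs. \<bar>zapps zs w q\<bar>) ` ZK p k)"

definition dnorm :: "nat \<Rightarrow> nat \<Rightarrow> fn \<Rightarrow> pt \<Rightarrow> real" where
  "dnorm p k w q = Max ((\<lambda>a. znorm p k (dpart a w) q) ` {0,1,2})"

definition Hnorm :: "nat \<Rightarrow> nat \<Rightarrow> (nat \<Rightarrow> nat \<Rightarrow> fn) \<Rightarrow> pt \<Rightarrow> real" where
  "Hnorm p k H q = Max ((\<lambda>(a,b). znorm p k (H a b) q) ` ({0,1,2} \<times> {0,1,2}))"

definition Habs :: "(nat \<Rightarrow> nat \<Rightarrow> fn) \<Rightarrow> pt \<Rightarrow> real" where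
  "Habs H q = Max ((\<lambda>(a,b). \<bar>H a b q\<bar>) ` ({0,1,2} \<times> {0,1,2}))"

text \<open>Transition matrix \<Psi>_\<alpha>^\<beta> (\<partial>_\<alpha> = \<Psi>_\<alpha>^\<beta> underline\<partial>_\<beta>).\<close>
definition Psi :: "nat \<Rightarrow> nat \<Rightarrow> fn" where
  "Psi a b q = (if a = 0 then (if b = 0 then 1 else 0)
                else (if b = 0 then - crd a q / crd 0 q else if a = b then 1 else 0))"

definition ubpart :: "nat \<Rightarrow> fn \<Rightarrow> fn" where
  "ubpart a w = (if a = 0 then dpart 0 w
                 else (\<lambda>q. crd a q / crd 0 q * dpart 0 w q + dpart a w q))"

definition Hbar :: "(nat \<Rightarrow> nat \<Rightarrow> fn) \<Rightarrow> nat \<Rightarrow> nat \<Rightarrow> fn" where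
  "Hbar H a b q = (\<Sum>a'\<in>{0,1,2}. \<Sum>b'\<in>{0,1,2}. H a' b' q * Psi a' a q * Psi b' b q)"

definition Hop :: "(nat \<Rightarrow> nat \<Rightarrow> fn) \<Rightarrow> fn \<Rightarrow> fn" where
  "Hop H w q =
     (\<Sum>a\<in>{0,1,2}. \<Sum>b\<in>{0,1,2}.
        if (a, b) = (0, 0) then 0 else Hbar H a b q * ubpart a (ubpart b w) q)
   + (\<Sum>a\<in>{0,1,2}. \<Sum>b\<in>{0,1,2}. \<Sum>b'\<in>{0,1,2}.
        H a b q * dpart a (Psi b b') q * ubpart b' w q)"

end

theory Submission
  imports Defs
begin


lemma line_deriv:
  assumes "(f has_derivative f') (at (p + h0 *\<^sub>R e))"
  shows "((\<lambda>h. f (p + h *\<^sub>R e)) has_real_derivative f' e) (at h0)"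
proof -
  have l: "linear f'" using assms has_derivative_linear by blast
  have "((\<lambda>h. p + h *\<^sub>R e) has_derivative (\<lambda>h. h *\<^sub>R e)) (at h0)"
    by (auto intro!: derivative_eq_intros)
  from has_derivative_compose[OF this assms]
  have "((\<lambda>h. f (p + h *\<^sub>R e)) has_derivative (\<lambda>h. f' (h *\<^sub>R e))) (at h0)" .
  moreover have "(\<lambda>h. f' (h *\<^sub>R e)) = (\<lambda>h. f' e * h)"
    using l by (simp add: linear_scale mult.commute)
  ultimately show ?thesis by (simp add: has_field_derivative_def)
qed

lemma dpart_hd:
  assumes "(f has_derivative f') (at q)"
  shows "dpart a f q = f' (ev a)"
proof -
  have "(f has_derivative f') (at (q + 0 *\<^sub>R ev a))" using assms by simp
  from line_deriv[OF this] show ?thesis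
    unfolding dpart_def by (rule DERIV_imp_deriv)
qed

lemma dpart_add:
  assumes "f differentiable (at q)" "g differentiable (at q)"
  shows "dpart a (\<lambda>x. f x + g x) q = dpart a f q + dpart a g q"
proof -
  obtain f' g' where f: "(f has_derivative f') (at q)" and g: "(g has_derivative g') (at q)"
    using assms unfolding differentiable_def by blast
  show ?thesis using dpart_hd[OF has_derivative_add[OF f g]] dpart_hd[OF f] dpart_hd[OF g] by simp
qed

lemma dpart_diff:
  assumes "f differentiable (at q)" "g differentiable (at q)"
  shows "dpart a (\<lambda>x. f x - g x) q = dpart a f q - dpart a g q"
proof -
  obtain f' g' where f: "(f has_derivative f') (at q)" and g: "(g has_derivative g') (at q)"
    using assms unfolding differentiable_def by blast
  show ?thesis using dpart_hd[OF has_derivative_diff[OF f g]] dpart_hd[OF f] dpart_hd[OF g] by simp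
qed

lemma dpart_mult:
  assumes "f differentiable (at q)" "g differentiable (at q)"
  shows "dpart a (\<lambda>x. f x * g x) q = f q * dpart a g q + dpart a f q * g q"
proof -
  obtain f' g' where f: "(f has_derivative f') (at q)" and g: "(g has_derivative g') (at q)"
    using assms unfolding differentiable_def by blast
  show ?thesis using dpart_hd[OF has_derivative_mult[OF f g]] dpart_hd[OF f] dpart_hd[OF g] by simp
qed

lemma dpart_const: "dpart a (\<lambda>x. c) q = 0"
  using dpart_hd[of "\<lambda>x. c" "\<lambda>_. 0" q a] by simp

lemma crd_eq: "crd a = (if a = 0 then fst else if a = 1 then (\<lambda>q. fst (snd q)) else (\<lambda>q. snd (snd q)))"
  by (auto simp: crd_def)

lemma crd_hd: "(crd a has_derivative crd a) (at q)"
  unfolding crd_eq by (auto intro!: derivative_eq_intros)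

lemma crd_differentiable: "crd a differentiable (at q)"
  using crd_hd unfolding differentiable_def by blast

lemma dpart_crd: "a \<le> 2 \<Longrightarrow> b \<le> 2 \<Longrightarrow> dpart a (crd b) q = (if a = b then 1 else 0)"
  using dpart_hd[OF crd_hd[of b q], of a]
  by (auto simp: crd_def ev_def)

lemma ev_nbhd:
  fixes e :: pt
  assumes "open V" "q \<in> V"
  shows "eventually (\<lambda>h. q + h *\<^sub>R e \<in> V) (nhds (0::real))"
proof -
  have c: "continuous_on UNIV (\<lambda>h::real. q + h *\<^sub>R e)" by (intro continuous_intros)
  have o: "open ((\<lambda>h::real. q + h *\<^sub>R e) -` V)"
    using open_vimage[OF assms(1) c] by simp
  show ?thesis using o assms(2) unfolding eventually_nhds by auto
qed

lemma dpart_local: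
  assumes "open V" "q \<in> V" "\<And>x. x \<in> V \<Longrightarrow> f x = g x"
  shows "dpart a f q = dpart a g q"
proof -
  have "eventually (\<lambda>h. f (q + h *\<^sub>R ev a) = g (q + h *\<^sub>R ev a)) (nhds (0::real))"
    using ev_nbhd[OF assms(1,2), of "ev a"] by (rule eventually_mono) (use assms(3) in blast)
  then show ?thesis unfolding dpart_def by (rule deriv_cong_ev) simp
qed



definition eqon :: "pt set \<Rightarrow> fn \<Rightarrow> fn \<Rightarrow> bool" where
  "eqon V f g \<longleftrightarrow> (\<forall>q\<in>V. f q = g q)"

lemma dparts_Nil[simp]: "dparts [] f = f" by (simp add: dparts_def)
lemma dparts_Cons[simp]: "dparts (a # ds) f = dpart a (dparts ds f)" by (simp add: dparts_def)
lemma dparts_append1: "dparts (ds @ [a]) f = dparts ds (dpart a f)" by (simp add: dparts_def)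

lemma differentiable_on_eqon:
  assumes "open V" "f differentiable_on V" "eqon V f g"
  shows "g differentiable_on V"
proof -
  have "\<forall>x\<in>V. g differentiable (at x)"
  proof
    fix x assume x: "x \<in> V"
    then obtain f' where "(f has_derivative f') (at x)"
      using assms(1,2) differentiable_on_eq_differentiable_at differentiable_def by blast
    then have "(g has_derivative f') (at x)"
      by (rule has_derivative_transform_within_open[OF _ assms(1) x]) (use assms(3) in \<open>auto simp: eqon_def\<close>)
    then show "g differentiable (at x)" unfolding differentiable_def by blast
  qed
  then show ?thesis using assms(1) differentiable_on_eq_differentiable_at by blast
qed

lemma eqon_dpart: "open V \<Longrightarrow> eqon V f g \<Longrightarrow> eqon V (dpart a f) (dpart a g)"
  unfolding eqon_def using dpart_local by blast

lemma eqon_dparts: "open V \<Longrightarrow> eqon V f g \<Longrightarrow> eqon V (dparts ds f) (dparts ds g)"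
  by (induction ds) (auto intro: eqon_dpart)

lemma eqon_sym: "eqon V f g \<Longrightarrow> eqon V g f" by (auto simp: eqon_def)
lemma eqon_trans: "eqon V f g \<Longrightarrow> eqon V g h \<Longrightarrow> eqon V f h" by (auto simp: eqon_def)
lemma eqon_refl: "eqon V f f" by (auto simp: eqon_def)

lemma sm_coind:
  assumes V: "open V" and f: "f \<in> S"
    and S: "\<And>g. g \<in> S \<Longrightarrow> g differentiable_on V \<and> (\<forall>a\<in>{0,1,2}. \<exists>h\<in>S. eqon V (dpart a g) h)"
  shows "smooth_on V f"
proof -
  have "\<forall>g\<in>S. dparts ds g differentiable_on V" if "set ds \<subseteq> {0,1,2}" for ds
    using that
  proof (induction ds rule: rev_induct)
    case Nil then show ?case using S by simp
  next
    case (snoc a ds)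
    show ?case
    proof
      fix g assume g: "g \<in> S"
      have a: "a \<in> {0,1,2}" using snoc.prems by auto
      obtain h where h: "h \<in> S" "eqon V (dpart a g) h" using S[OF g] a by blast
      have "dparts ds h differentiable_on V" using snoc h by auto
      moreover have "eqon V (dparts ds h) (dparts ds (dpart a g))"
        using eqon_dparts[OF V eqon_sym[OF h(2)]] .
      ultimately have "dparts ds (dpart a g) differentiable_on V"
        using differentiable_on_eqon[OF V] by blast
      then show "dparts (ds @ [a]) g differentiable_on V"
        by (simp only: dparts_append1)
    qed
  qed
  then show ?thesis unfolding smooth_on_def using f by blast
qed

lemma sm_diff_on: "smooth_on V f \<Longrightarrow> f differentiable_on V"
  unfolding smooth_on_def by (drule spec[of _ "[]"]) simp

lemma sm_diff_at: "open V \<Longrightarrow> smooth_on V f \<Longrightarrow> q \<in> V \<Longrightarrow> f differentiable (at q)"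
  using sm_diff_on differentiable_on_eq_differentiable_at by blast

lemma le2_iff: "(a::nat) \<le> 2 \<longleftrightarrow> a \<in> {0,1,2}" by auto

lemma sm_dpart: "smooth_on V f \<Longrightarrow> a \<le> 2 \<Longrightarrow> smooth_on V (dpart a f)"
  unfolding smooth_on_def
proof (intro allI impI)
  fix ds :: "nat list"
  assume h: "\<forall>ds. set ds \<subseteq> {0, 1, 2} \<longrightarrow> dparts ds f differentiable_on V" "a \<le> 2" "set ds \<subseteq> {0,1,2}"
  then have "set (ds @ [a]) \<subseteq> {0,1,2}" using le2_iff by auto
  from h(1)[rule_format, OF this] show "dparts ds (dpart a f) differentiable_on V"
    by (simp add: dparts_append1)
qed

lemma sm_eqon: "open V \<Longrightarrow> smooth_on V f \<Longrightarrow> eqon V f g \<Longrightarrow> smooth_on V g"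
  unfolding smooth_on_def
proof (intro allI impI)
  fix ds :: "nat list"
  assume "open V" "\<forall>ds. set ds \<subseteq> {0, 1, 2} \<longrightarrow> dparts ds f differentiable_on V" "eqon V f g" "set ds \<subseteq> {0,1,2}"
  then show "dparts ds g differentiable_on V"
    using eqon_dparts[of V f g ds] differentiable_on_eqon[of V "dparts ds f" "dparts ds g"] by blast
qed

lemma sm_subset: "smooth_on V f \<Longrightarrow> W \<subseteq> V \<Longrightarrow> smooth_on W f"
  unfolding smooth_on_def by (meson differentiable_on_subset)



lemma diff_mult_at: "(f::fn) differentiable (at q) \<Longrightarrow> (g::fn) differentiable (at q) \<Longrightarrow> (\<lambda>x. f x * g x) differentiable (at q)"
  unfolding differentiable_def using has_derivative_mult by blast

lemma diff_sum_list:
  "(\<forall>x\<in>set xs. F x differentiable (at q)) \<Longrightarrow> (\<lambda>q. \<Sum>x\<leftarrow>xs. F x q) differentiable (at q)"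
proof (induction xs)
  case Nil then show ?case by simp
next
  case (Cons x xs)
  then have "(\<lambda>q. F x q + (\<Sum>x\<leftarrow>xs. F x q)) differentiable (at q)"
    by (intro differentiable_add) (auto simp: fun_eq_iff)
  then show ?case by simp
qed

lemma dpart_sum_list:
  "(\<forall>x\<in>set xs. F x differentiable (at q)) \<Longrightarrow> dpart a (\<lambda>q. \<Sum>x\<leftarrow>xs. F x q) q = (\<Sum>x\<leftarrow>xs. dpart a (F x) q)"
proof (induction xs)
  case Nil then show ?case by (simp add: dpart_const)
next
  case (Cons x xs)
  have "dpart a (\<lambda>q. F x q + (\<Sum>x\<leftarrow>xs. F x q)) q = dpart a (F x) q + dpart a (\<lambda>q. \<Sum>x\<leftarrow>xs. F x q) q"
    using Cons.prems diff_sum_list[of xs F q] by (intro dpart_add) (auto simp: fun_eq_iff)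
  then show ?case using Cons by simp
qed

lemma sum_list_pairs:
  "(\<Sum>(f,g)\<leftarrow>concat (map (\<lambda>(f,g). [(f, G f g), (F f g, g)]) xs). (f q::real) * g q)
   = (\<Sum>(f,g)\<leftarrow>xs. f q * G f g q + F f g q * g q)"
  by (induction xs) auto

lemma diff_prodsum:
  fixes xs :: "(fn \<times> fn) list"
  assumes "\<forall>(f,g)\<in>set xs. f differentiable (at q) \<and> g differentiable (at q)"
  shows "(\<lambda>q. \<Sum>(f,g)\<leftarrow>xs. f q * g q) differentiable (at q)"
proof -
  have "(\<lambda>q. \<Sum>x\<leftarrow>xs. (\<lambda>q. fst x q * snd x q) q) differentiable (at q)"
  proof (intro diff_sum_list ballI)
    fix x assume "x \<in> set xs"
    then have "fst x differentiable (at q)" "snd x differentiable (at q)" using assms by (cases x, auto)+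
    then show "(\<lambda>q. fst x q * snd x q) differentiable (at q)" by (rule diff_mult_at)
  qed
  then show ?thesis by (simp add: case_prod_beta')
qed

lemma dpart_prodsum:
  fixes xs :: "(fn \<times> fn) list"
  assumes "\<forall>(f,g)\<in>set xs. f differentiable (at q) \<and> g differentiable (at q)"
  shows "dpart a (\<lambda>q. \<Sum>(f,g)\<leftarrow>xs. f q * g q) q = (\<Sum>(f,g)\<leftarrow>xs. f q * dpart a g q + dpart a f q * g q)"
proof -
  have "dpart a (\<lambda>q. \<Sum>x\<leftarrow>xs. (\<lambda>q. fst x q * snd x q) q) q = (\<Sum>x\<leftarrow>xs. dpart a (\<lambda>q. fst x q * snd x q) q)"
  proof (intro dpart_sum_list ballI)
    fix x assume "x \<in> set xs"
    then have "fst x differentiable (at q)" "snd x differentiable (at q)" using assms by (cases x, auto)+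
    then show "(\<lambda>q. fst x q * snd x q) differentiable (at q)" by (rule diff_mult_at)
  qed
  also have "\<dots> = (\<Sum>x\<leftarrow>xs. fst x q * dpart a (snd x) q + dpart a (fst x) q * snd x q)"
  proof (intro arg_cong[where f=sum_list] map_cong refl dpart_mult)
    fix x assume "x \<in> set xs"
    then show "fst x differentiable (at q)" "snd x differentiable (at q)" using assms by (cases x, auto)+
  qed
  finally show ?thesis by (simp add: case_prod_beta')
qed

lemma sm_prodsum:
  fixes xs :: "(fn \<times> fn) list"
  assumes V: "open V" and xs: "\<forall>(f,g)\<in>set xs. smooth_on V f \<and> smooth_on V g"
  shows "smooth_on V (\<lambda>q. \<Sum>(f,g)\<leftarrow>xs. f q * g q)"
proof -
  define S where "S = {h. \<exists>xs. (\<forall>(f,g)\<in>set xs. smooth_on V f \<and> smooth_on V g) \<and> eqon V h (\<lambda>q. \<Sum>(f,g)\<leftarrow>xs. f q * g q)}"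
  show ?thesis
  proof (rule sm_coind[OF V, of _ S])
    show "(\<lambda>q. \<Sum>(f,g)\<leftarrow>xs. f q * g q) \<in> S" unfolding S_def
      by (rule CollectI, rule exI[of _ xs], rule conjI[OF xs eqon_refl])
  next
    fix h assume "h \<in> S"
    then obtain ys where ys: "\<forall>(f,g)\<in>set ys. smooth_on V f \<and> smooth_on V g"
      and e: "eqon V h (\<lambda>q. \<Sum>(f,g)\<leftarrow>ys. f q * g q)" unfolding S_def by blast
    have d: "\<forall>(f,g)\<in>set ys. f differentiable (at q) \<and> g differentiable (at q)" if "q \<in> V" for q
    proof (intro ballI)
      fix x assume "x \<in> set ys"
      then have "smooth_on V (fst x)" "smooth_on V (snd x)" using ys by (cases x, auto)+
      then have "fst x differentiable (at q)" "snd x differentiable (at q)"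
        using sm_diff_at[OF V _ that] by auto
      then show "case x of (f,g) \<Rightarrow> f differentiable (at q) \<and> g differentiable (at q)"
        by (cases x) auto
    qed
    have "\<forall>q\<in>V. (\<lambda>q. \<Sum>(f,g)\<leftarrow>ys. f q * g q) differentiable (at q)"
      using d diff_prodsum by simp
    then have "(\<lambda>q. \<Sum>(f,g)\<leftarrow>ys. f q * g q) differentiable_on V"
      by (simp add: differentiable_on_eq_differentiable_at[OF V])
    then have dh: "h differentiable_on V" using differentiable_on_eqon[OF V _ eqon_sym[OF e]] by simp
    have "\<exists>k\<in>S. eqon V (dpart a h) k" if a: "a \<in> {0,1,2}" for a
    proof -
      define zs where "zs = concat (map (\<lambda>(f,g). [(f, dpart a g), (dpart a f, g)]) ys)"
      have a2: "a \<le> 2" using a by auto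
      have zs: "\<forall>(f,g)\<in>set zs. smooth_on V f \<and> smooth_on V g"
      proof
        fix x assume "x \<in> set zs"
        then obtain y where y: "y \<in> set ys" and x: "x \<in> set (case y of (f,g) \<Rightarrow> [(f, dpart a g), (dpart a f, g)])"
          unfolding zs_def by auto
        have "smooth_on V (fst y)" "smooth_on V (snd y)" using ys y by (cases y, auto)+
        then have "smooth_on V (dpart a (fst y))" "smooth_on V (dpart a (snd y))" using sm_dpart a2 by auto
        then show "case x of (f,g) \<Rightarrow> smooth_on V f \<and> smooth_on V g"
          using x \<open>smooth_on V (fst y)\<close> \<open>smooth_on V (snd y)\<close> by (cases y) auto
      qed
      have "eqon V (dpart a h) (\<lambda>q. \<Sum>(f,g)\<leftarrow>zs. f q * g q)"
        unfolding eqon_def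
      proof
        fix q assume q: "q \<in> V"
        have "dpart a h q = dpart a (\<lambda>q. \<Sum>(f,g)\<leftarrow>ys. f q * g q) q"
          by (rule dpart_local[OF V q]) (use e in \<open>simp add: eqon_def\<close>)
        also have "\<dots> = (\<Sum>(f,g)\<leftarrow>ys. f q * dpart a g q + dpart a f q * g q)"
          using dpart_prodsum[OF d[OF q]] .
        also have "\<dots> = (\<Sum>(f,g)\<leftarrow>zs. f q * g q)"
          unfolding zs_def by (rule sum_list_pairs[symmetric])
        finally show "dpart a h q = (\<Sum>(f,g)\<leftarrow>zs. f q * g q)" .
      qed
      then have "dpart a h \<in> S" unfolding S_def
        by (intro CollectI exI[of _ zs] conjI zs)
      then show ?thesis using eqon_refl by blast
    qed
    then show "h differentiable_on V \<and> (\<forall>a\<in>{0,1,2}. \<exists>k\<in>S. eqon V (dpart a h) k)"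
      using dh by blast
  qed
qed

lemma dpart_const_fun: "dpart a (\<lambda>x. c) = (\<lambda>x. 0)"
  by (rule ext) (rule dpart_const)

lemma sm_const: "open V \<Longrightarrow> smooth_on V (\<lambda>x::pt. c::real)"
proof (rule sm_coind[of V _ "range (\<lambda>c x. c)"])
  fix g :: fn assume "g \<in> range (\<lambda>c x. c)"
  then obtain c where g: "g = (\<lambda>x. c)" by blast
  have "(\<lambda>x::pt. 0::real) \<in> range (\<lambda>c x. c)" by blast
  then show "g differentiable_on V \<and> (\<forall>a\<in>{0,1,2}. \<exists>h\<in>range (\<lambda>c x. c). eqon V (dpart a g) h)"
    unfolding g dpart_const_fun using eqon_refl by auto
qed auto

lemma sm_crd: "open V \<Longrightarrow> b \<le> 2 \<Longrightarrow> smooth_on V (crd b)"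
  for V :: "pt set"
proof (rule sm_coind[of V _ "range (\<lambda>c x. c) \<union> crd ` {0,1,2}"])
  fix g assume "g \<in> range (\<lambda>c x. c) \<union> crd ` {0,1,2}"
  then show "g differentiable_on V \<and> (\<forall>a\<in>{0,1,2}. \<exists>h\<in>range (\<lambda>c x. c) \<union> crd ` {0,1,2}. eqon V (dpart a g) h)"
  proof
    assume "g \<in> range (\<lambda>c x. c)"
    then obtain c where g: "g = (\<lambda>x. c)" by blast
    have "(\<lambda>x::pt. 0::real) \<in> range (\<lambda>c x. c) \<union> crd ` {0,1,2}" by blast
    then show ?thesis unfolding g dpart_const_fun using eqon_refl by auto
  next
    assume "g \<in> crd ` {0,1,2}"
    then obtain b where b: "b \<in> {0,1,2}" and g: "g = crd b" by blast
    have "g differentiable_on V" unfolding g using crd_differentiable differentiable_at_imp_differentiable_on by blast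
    moreover have "\<exists>h\<in>range (\<lambda>c x. c) \<union> crd ` {0,1,2}. eqon V (dpart a g) h" if "a \<in> {0,1,2}" for a
    proof -
      have "dpart a g = (\<lambda>x. if a = b then 1 else 0)" using that b unfolding g by (auto simp: dpart_crd)
      moreover have "(\<lambda>x::pt. if a = b then 1 else 0::real) \<in> range (\<lambda>c x. c) \<union> crd ` {0,1,2}" by blast
      ultimately show ?thesis using eqon_refl by metis
    qed
    ultimately show ?thesis by blast
  qed
next
  assume "b \<le> 2"
  then have "b \<in> {0,1,2}" using le2_iff by blast
  then show "crd b \<in> range (\<lambda>c x. c) \<union> crd ` {0,1,2}" by blast
qed

lemma sm_mult: "open V \<Longrightarrow> smooth_on V f \<Longrightarrow> smooth_on V g \<Longrightarrow> smooth_on V (\<lambda>q. f q * g q)"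
  using sm_prodsum[of V "[(f,g)]"] by simp

lemma sm_add: "open V \<Longrightarrow> smooth_on V f \<Longrightarrow> smooth_on V g \<Longrightarrow> smooth_on V (\<lambda>q. f q + g q)"
  using sm_prodsum[of V "[(f,\<lambda>_. 1),(g,\<lambda>_. 1)]"] sm_const[of V 1] by simp

lemma sm_scale: "open V \<Longrightarrow> smooth_on V f \<Longrightarrow> smooth_on V (\<lambda>q. c * f q)"
  using sm_mult[of V "\<lambda>_. c" f] sm_const by blast

lemma sm_diff: "open V \<Longrightarrow> smooth_on V f \<Longrightarrow> smooth_on V g \<Longrightarrow> smooth_on V (\<lambda>q. f q - g q)"
  using sm_add[of V f "\<lambda>q. (-1) * g q"] sm_scale[of V g "-1"] by simp

lemma sm_sum_list: "open V \<Longrightarrow> \<forall>x\<in>set xs. smooth_on V (F x) \<Longrightarrow> smooth_on V (\<lambda>q. \<Sum>x\<leftarrow>xs. F x q)"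
proof (induction xs)
  case Nil then show ?case using sm_const[of V 0] by simp
next
  case (Cons x xs)
  then show ?case using sm_add[of V "F x" "\<lambda>q. \<Sum>x\<leftarrow>xs. F x q"] by simp
qed



lemma line_dpart:
  assumes "f differentiable (at (p + s *\<^sub>R ev a))"
  shows "((\<lambda>h. f (p + h *\<^sub>R ev a)) has_real_derivative dpart a f (p + s *\<^sub>R ev a)) (at s)"
proof -
  obtain f' where f: "(f has_derivative f') (at (p + s *\<^sub>R ev a))"
    using assms unfolding differentiable_def by blast
  show ?thesis using line_deriv[OF f] dpart_hd[OF f] by simp
qed

lemma norm_ev: "a \<le> 2 \<Longrightarrow> norm (ev a) = 1"
  by (auto simp: ev_def le2_iff norm_prod_def)

lemma schwarz_mvt:
  fixes f :: fn
  assumes V: "open V" and sm: "smooth_on V f" and a: "a \<le> 2" and b: "b \<le> 2"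
    and h: "h > 0"
    and box: "\<And>s r. \<bar>s\<bar> \<le> h \<Longrightarrow> \<bar>r\<bar> \<le> h \<Longrightarrow> q + s *\<^sub>R ev a + r *\<^sub>R ev b \<in> V"
  shows "\<exists>s r. \<bar>s\<bar> \<le> h \<and> \<bar>r\<bar> \<le> h \<and>
    f (q + h *\<^sub>R ev a + h *\<^sub>R ev b) - f (q + h *\<^sub>R ev a) - f (q + h *\<^sub>R ev b) + f q
     = h * h * dpart b (dpart a f) (q + s *\<^sub>R ev a + r *\<^sub>R ev b)"
proof -
  have df: "f differentiable (at x)" if "x \<in> V" for x using sm_diff_at[OF V sm that] .
  have dfa: "dpart a f differentiable (at x)" if "x \<in> V" for x using sm_diff_at[OF V sm_dpart[OF sm a] that] .
  define g where "g s = f (q + h *\<^sub>R ev b + s *\<^sub>R ev a) - f (q + s *\<^sub>R ev a)" for s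
  have g': "(g has_real_derivative (dpart a f (q + h *\<^sub>R ev b + s *\<^sub>R ev a) - dpart a f (q + s *\<^sub>R ev a))) (at s)"
    if "0 \<le> s" "s \<le> h" for s
  proof -
    have "q + h *\<^sub>R ev b + s *\<^sub>R ev a \<in> V" using box[of s h] that h by (simp add: algebra_simps)
    moreover have "q + s *\<^sub>R ev a \<in> V" using box[of s 0] that h by simp
    ultimately show ?thesis unfolding g_def
      by (intro DERIV_diff line_dpart df)
  qed
  obtain s where s: "0 < s" "s < h" and gs: "g h - g 0 = (h - 0) * (dpart a f (q + h *\<^sub>R ev b + s *\<^sub>R ev a) - dpart a f (q + s *\<^sub>R ev a))"
    using MVT2[OF h, of g "\<lambda>s. dpart a f (q + h *\<^sub>R ev b + s *\<^sub>R ev a) - dpart a f (q + s *\<^sub>R ev a)"] g' by auto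
  define k where "k r = dpart a f (q + s *\<^sub>R ev a + r *\<^sub>R ev b)" for r
  have k': "(k has_real_derivative dpart b (dpart a f) (q + s *\<^sub>R ev a + r *\<^sub>R ev b)) (at r)"
    if "0 \<le> r" "r \<le> h" for r
  proof -
    have "q + s *\<^sub>R ev a + r *\<^sub>R ev b \<in> V" using box[of s r] that s by simp
    then show ?thesis unfolding k_def by (intro line_dpart dfa)
  qed
  obtain r where r: "0 < r" "r < h" and kr: "k h - k 0 = (h - 0) * dpart b (dpart a f) (q + s *\<^sub>R ev a + r *\<^sub>R ev b)"
    using MVT2[OF h, of k "\<lambda>r. dpart b (dpart a f) (q + s *\<^sub>R ev a + r *\<^sub>R ev b)"] k' by auto
  have "f (q + h *\<^sub>R ev a + h *\<^sub>R ev b) - f (q + h *\<^sub>R ev a) - f (q + h *\<^sub>R ev b) + f q = g h - g 0"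
    unfolding g_def by (simp add: algebra_simps)
  also have "\<dots> = h * (k h - k 0)" using gs unfolding k_def by (simp add: algebra_simps)
  also have "\<dots> = h * h * dpart b (dpart a f) (q + s *\<^sub>R ev a + r *\<^sub>R ev b)" using kr by simp
  finally show ?thesis using s r by (intro exI[of _ s] exI[of _ r]) auto
qed

lemma schwarz:
  fixes f :: fn
  assumes V: "open V" and sm: "smooth_on V f" and a: "a \<le> 2" and b: "b \<le> 2" and q: "q \<in> V"
  shows "dpart b (dpart a f) q = dpart a (dpart b f) q"
proof (rule ccontr)
  define P where "P = dpart b (dpart a f)"
  define Q where "Q = dpart a (dpart b f)"
  assume "\<not> dpart b (dpart a f) q = dpart a (dpart b f) q"
  then have ne: "P q \<noteq> Q q" unfolding P_def Q_def .
  define e where "e = \<bar>P q - Q q\<bar> / 2"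
  have e: "e > 0" using ne unfolding e_def by simp
  have cP: "continuous (at q) P" unfolding P_def
    using sm_diff_at[OF V sm_dpart[OF sm_dpart[OF sm a] b] q] differentiable_imp_continuous_within by blast
  have cQ: "continuous (at q) Q" unfolding Q_def
    using sm_diff_at[OF V sm_dpart[OF sm_dpart[OF sm b] a] q] differentiable_imp_continuous_within by blast
  obtain d1 where d1: "d1 > 0" "\<And>x. dist x q < d1 \<Longrightarrow> dist (P x) (P q) < e"
    using cP e unfolding continuous_at_eps_delta by blast
  obtain d2 where d2: "d2 > 0" "\<And>x. dist x q < d2 \<Longrightarrow> dist (Q x) (Q q) < e"
    using cQ e unfolding continuous_at_eps_delta by blast
  obtain d3 where d3: "d3 > 0" "ball q d3 \<subseteq> V" using V q open_contains_ball by blast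
  define h where "h = min d1 (min d2 d3) / 3"
  have h: "h > 0" using d1 d2 d3 unfolding h_def by simp
  have near: "dist (q + s *\<^sub>R ev x + r *\<^sub>R ev y) q < min d1 (min d2 d3)"
    if "\<bar>s\<bar> \<le> h" "\<bar>r\<bar> \<le> h" "x \<le> 2" "y \<le> 2" for s r x y
  proof -
    have "dist (q + s *\<^sub>R ev x + r *\<^sub>R ev y) q = norm (s *\<^sub>R ev x + r *\<^sub>R ev y)"
      by (simp add: dist_norm)
    also have "\<dots> \<le> norm (s *\<^sub>R ev x) + norm (r *\<^sub>R ev y)" by (rule norm_triangle_ineq)
    also have "\<dots> = \<bar>s\<bar> + \<bar>r\<bar>" using norm_ev[OF that(3)] norm_ev[OF that(4)] by simp
    also have "\<dots> \<le> 2 * h" using that by simp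
    also have "\<dots> < min d1 (min d2 d3)" unfolding h_def using d1(1) d2(1) d3(1) by (simp add: min_def)
    finally show ?thesis .
  qed
  have box1: "q + s *\<^sub>R ev a + r *\<^sub>R ev b \<in> V" if "\<bar>s\<bar> \<le> h" "\<bar>r\<bar> \<le> h" for s r
    using near[OF that a b] d3(2) by (auto simp: dist_commute)
  have box2: "q + s *\<^sub>R ev b + r *\<^sub>R ev a \<in> V" if "\<bar>s\<bar> \<le> h" "\<bar>r\<bar> \<le> h" for s r
    using near[OF that b a] d3(2) by (auto simp: dist_commute)
  obtain s1 r1 where sr1: "\<bar>s1\<bar> \<le> h" "\<bar>r1\<bar> \<le> h" and E1:
    "f (q + h *\<^sub>R ev a + h *\<^sub>R ev b) - f (q + h *\<^sub>R ev a) - f (q + h *\<^sub>R ev b) + f q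
     = h * h * P (q + s1 *\<^sub>R ev a + r1 *\<^sub>R ev b)"
    using schwarz_mvt[OF V sm a b h box1] unfolding P_def by blast
  obtain s2 r2 where sr2: "\<bar>s2\<bar> \<le> h" "\<bar>r2\<bar> \<le> h" and E2:
    "f (q + h *\<^sub>R ev b + h *\<^sub>R ev a) - f (q + h *\<^sub>R ev b) - f (q + h *\<^sub>R ev a) + f q
     = h * h * Q (q + s2 *\<^sub>R ev b + r2 *\<^sub>R ev a)"
    using schwarz_mvt[OF V sm b a h box2] unfolding Q_def by blast
  have "h * h * P (q + s1 *\<^sub>R ev a + r1 *\<^sub>R ev b) = h * h * Q (q + s2 *\<^sub>R ev b + r2 *\<^sub>R ev a)"
    using E1 E2 by (simp add: algebra_simps)
  then have PQ: "P (q + s1 *\<^sub>R ev a + r1 *\<^sub>R ev b) = Q (q + s2 *\<^sub>R ev b + r2 *\<^sub>R ev a)"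
    using h by simp
  have "dist (P (q + s1 *\<^sub>R ev a + r1 *\<^sub>R ev b)) (P q) < e"
    using d1(2) near[OF sr1 a b] by simp
  moreover have "dist (Q (q + s2 *\<^sub>R ev b + r2 *\<^sub>R ev a)) (Q q) < e"
    using d2(2) near[OF sr2 b a] by simp
  ultimately have "\<bar>P q - Q q\<bar> < 2 * e" using PQ by (simp add: dist_real_def)
  then show False unfolding e_def by simp
qed



definition AZ :: "zop set" where "AZ = {Dz 0, Dz 1, Dz 2, Lz 1, Lz 2}"

lemma AZ_cases: "Z \<in> AZ \<Longrightarrow> (\<And>a. Z = Dz a \<Longrightarrow> a \<le> 2 \<Longrightarrow> P) \<Longrightarrow> (\<And>b. Z = Lz b \<Longrightarrow> b \<in> {1,2} \<Longrightarrow> P) \<Longrightarrow> P"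
  unfolding AZ_def by auto

lemma boost_add:
  assumes "f differentiable (at q)" "g differentiable (at q)"
  shows "boost a (\<lambda>x. f x + g x) q = boost a f q + boost a g q"
  unfolding boost_def using dpart_add[OF assms] by (simp add: algebra_simps)

lemma boost_mult:
  assumes "f differentiable (at q)" "g differentiable (at q)"
  shows "boost a (\<lambda>x. f x * g x) q = f q * boost a g q + boost a f q * g q"
  unfolding boost_def using dpart_mult[OF assms] by (simp add: algebra_simps)

lemma boost_local:
  assumes "open V" "q \<in> V" "\<And>x. x \<in> V \<Longrightarrow> f x = g x"
  shows "boost a f q = boost a g q"
  unfolding boost_def using dpart_local[OF assms] by simp

lemma zapp_add:
  assumes "f differentiable (at q)" "g differentiable (at q)"
  shows "zapp Z (\<lambda>x. f x + g x) q = zapp Z f q + zapp Z g q"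
  by (cases Z) (auto simp: dpart_add[OF assms] boost_add[OF assms])

lemma zapp_mult:
  assumes "f differentiable (at q)" "g differentiable (at q)"
  shows "zapp Z (\<lambda>x. f x * g x) q = f q * zapp Z g q + zapp Z f q * g q"
  by (cases Z) (auto simp: dpart_mult[OF assms] boost_mult[OF assms])

lemma zapp_const: "zapp Z (\<lambda>x. c) q = 0"
  by (cases Z) (auto simp: dpart_const boost_def)

lemma zapp_local:
  assumes "open V" "q \<in> V" "\<And>x. x \<in> V \<Longrightarrow> f x = g x"
  shows "zapp Z f q = zapp Z g q"
  by (cases Z) (auto simp: dpart_local[OF assms] boost_local[OF assms])

lemma eqon_zapp: "open V \<Longrightarrow> eqon V f g \<Longrightarrow> eqon V (zapp Z f) (zapp Z g)"
  unfolding eqon_def using zapp_local by blast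

lemma zapp_sum_list:
  "(\<forall>x\<in>set xs. F x differentiable (at q)) \<Longrightarrow> zapp Z (\<lambda>q. \<Sum>x\<leftarrow>xs. F x q) q = (\<Sum>x\<leftarrow>xs. zapp Z (F x) q)"
proof (induction xs)
  case Nil then show ?case by (simp add: zapp_const)
next
  case (Cons x xs)
  have "zapp Z (\<lambda>q. F x q + (\<Sum>x\<leftarrow>xs. F x q)) q = zapp Z (F x) q + zapp Z (\<lambda>q. \<Sum>x\<leftarrow>xs. F x q) q"
    using Cons.prems diff_sum_list[of xs F q] by (intro zapp_add) auto
  then show ?case using Cons by simp
qed

lemma sm_boost: "open V \<Longrightarrow> smooth_on V f \<Longrightarrow> a \<le> 2 \<Longrightarrow> smooth_on V (boost a f)"
  unfolding boost_def
  by (intro sm_add sm_mult sm_crd sm_dpart) auto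

lemma sm_zapp: "open V \<Longrightarrow> smooth_on V f \<Longrightarrow> Z \<in> AZ \<Longrightarrow> smooth_on V (zapp Z f)"
  by (erule AZ_cases) (auto intro: sm_dpart sm_boost)

lemma zapps_Nil[simp]: "zapps [] f = f" by (simp add: zapps_def)
lemma zapps_Cons[simp]: "zapps (Z # zs) f = zapp Z (zapps zs f)" by (simp add: zapps_def)

lemma sm_zapps: "open V \<Longrightarrow> smooth_on V f \<Longrightarrow> set zs \<subseteq> AZ \<Longrightarrow> smooth_on V (zapps zs f)"
  by (induction zs) (auto intro: sm_zapp)

lemma eqon_zapps: "open V \<Longrightarrow> eqon V f g \<Longrightarrow> eqon V (zapps zs f) (zapps zs g)"
  by (induction zs) (auto intro: eqon_zapp)

lemma comm_dL:
  assumes V: "open V" and sm: "smooth_on V f" and q: "q \<in> V" and g: "c \<le> 2" and b: "b \<le> 2"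
  shows "dpart c (boost b f) q = boost b (dpart c f) q + (if c = b then dpart 0 f q else 0) + (if c = 0 then dpart b f q else 0)"
proof -
  have d0: "dpart 0 f differentiable (at q)" using sm_diff_at[OF V sm_dpart[OF sm] q] by simp
  have db: "dpart b f differentiable (at q)" using sm_diff_at[OF V sm_dpart[OF sm b] q] .
  have "dpart c (boost b f) q = dpart c (\<lambda>x. crd b x * dpart 0 f x) q + dpart c (\<lambda>x. crd 0 x * dpart b f x) q"
    unfolding boost_def by (intro dpart_add diff_mult_at crd_differentiable d0 db)
  also have "\<dots> = crd b q * dpart c (dpart 0 f) q + dpart c (crd b) q * dpart 0 f q
     + (crd 0 q * dpart c (dpart b f) q + dpart c (crd 0) q * dpart b f q)"
    by (simp add: dpart_mult crd_differentiable d0 db)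
  also have "\<dots> = crd b q * dpart 0 (dpart c f) q + crd 0 q * dpart b (dpart c f) q
     + (if c = b then dpart 0 f q else 0) + (if c = 0 then dpart b f q else 0)"
    using schwarz[OF V sm _ g q, of 0] schwarz[OF V sm b g q] dpart_crd[OF g b] dpart_crd[OF g, of 0] by simp
  finally show ?thesis unfolding boost_def by simp
qed

lemma comm_LL:
  assumes V: "open V" and sm: "smooth_on V f" and q: "q \<in> V" and b: "b \<in> {1,2}" and c: "c \<in> {1,2}"
  shows "boost c (boost b f) q - boost b (boost c f) q = crd c q * dpart b f q - crd b q * dpart c f q"
proof -
  have b2: "b \<le> 2" and c2: "c \<le> 2" using b c by auto
  have b0: "b \<noteq> 0" "c \<noteq> 0" using b c by auto
  have A: "boost c (boost b f) q = crd c q * (boost b (dpart 0 f) q + dpart b f q)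
        + crd 0 q * (boost b (dpart c f) q + (if c = b then dpart 0 f q else 0))"
    unfolding boost_def[of c "boost b f"] using comm_dL[OF V sm q _ b2, of 0] comm_dL[OF V sm q c2 b2] b0 by simp
  have B: "boost b (boost c f) q = crd b q * (boost c (dpart 0 f) q + dpart c f q)
        + crd 0 q * (boost c (dpart b f) q + (if b = c then dpart 0 f q else 0))"
    unfolding boost_def[of b "boost c f"] using comm_dL[OF V sm q _ c2, of 0] comm_dL[OF V sm q b2 c2] b0 by simp
  have s1: "dpart 0 (dpart b f) q = dpart b (dpart 0 f) q" using schwarz[OF V sm b2 _ q, of 0] by simp
  have s2: "dpart 0 (dpart c f) q = dpart c (dpart 0 f) q" using schwarz[OF V sm c2 _ q, of 0] by simp
  have s3: "dpart c (dpart b f) q = dpart b (dpart c f) q" using schwarz[OF V sm b2 c2 q] by simp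
  show ?thesis unfolding A B unfolding boost_def using s1 s2 s3 by (simp add: algebra_simps)
qed

lemma rot_boost:
  assumes "crd 0 q \<noteq> 0"
  shows "crd c q * dpart b f q - crd b q * dpart c f q
    = crd c q / crd 0 q * boost b f q - crd b q / crd 0 q * boost c f q"
  using assms unfolding boost_def by (simp add: field_simps)



definition Tpos :: "pt set" where "Tpos = {q. crd 0 q > 0}"

lemma open_Tpos: "open Tpos"
proof -
  have "Tpos = {q. 0 < fst q}" unfolding Tpos_def crd_def by simp
  moreover have "open {q::pt. 0 < fst q}"
    by (rule open_Collect_less) (auto intro: continuous_intros)
  ultimately show ?thesis by simp
qed

definition cone0 :: "pt set" where
  "cone0 = {q. 1 \<le> crd 0 q \<and> \<bar>crd 1 q\<bar> \<le> crd 0 q \<and> \<bar>crd 2 q\<bar> \<le> crd 0 q}"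

lemma cone0_Tpos: "cone0 \<subseteq> Tpos" unfolding cone0_def Tpos_def by auto

inductive_set Coef :: "fn set" where
  cconst: "(\<lambda>q. c) \<in> Coef"
| cy: "b \<in> {1,2} \<Longrightarrow> (\<lambda>q. crd b q / crd 0 q) \<in> Coef"
| cs: "(\<lambda>q. 1 / crd 0 q) \<in> Coef"
| cadd: "f \<in> Coef \<Longrightarrow> g \<in> Coef \<Longrightarrow> (\<lambda>q. f q + g q) \<in> Coef"
| cmul: "f \<in> Coef \<Longrightarrow> g \<in> Coef \<Longrightarrow> (\<lambda>q. f q * g q) \<in> Coef"
| ceq: "g \<in> Coef \<Longrightarrow> eqon Tpos f g \<Longrightarrow> f \<in> Coef"

lemma s_hd: "crd 0 q \<noteq> 0 \<Longrightarrow> ((\<lambda>q. 1 / crd 0 q) has_derivative (\<lambda>h. - crd 0 h / (crd 0 q)^2)) (at q)"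
  by (rule derivative_eq_intros crd_hd refl | simp add: power2_eq_square field_simps)+

lemma y_hd: "crd 0 q \<noteq> 0 \<Longrightarrow> ((\<lambda>q. crd b q / crd 0 q) has_derivative
   (\<lambda>h. (crd b h * crd 0 q - crd b q * crd 0 h) / (crd 0 q)^2)) (at q)"
  by (rule derivative_eq_intros crd_hd refl | simp add: power2_eq_square field_simps)+

lemma Coef_diff: "f \<in> Coef \<Longrightarrow> q \<in> Tpos \<Longrightarrow> f differentiable (at q)"
proof (induction f arbitrary: q rule: Coef.induct)
  case (cconst c) then show ?case by simp
next
  case (cy b)
  then have "crd 0 q \<noteq> 0" unfolding Tpos_def by auto
  then show ?case using y_hd[of q b] unfolding differentiable_def by blast
next
  case cs
  then have "crd 0 q \<noteq> 0" unfolding Tpos_def by auto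
  then show ?case using s_hd[of q] unfolding differentiable_def by blast
next
  case (cadd f g) then show ?case by (intro differentiable_add) auto
next
  case (cmul f g) then show ?case by (intro diff_mult_at) auto
next
  case (ceq g f)
  then obtain g' where "(g has_derivative g') (at q)" unfolding differentiable_def by blast
  then have "(f has_derivative g') (at q)"
    by (rule has_derivative_transform_within_open[OF _ open_Tpos ceq.prems]) (use ceq.hyps in \<open>auto simp: eqon_def\<close>)
  then show ?case unfolding differentiable_def by blast
qed

lemma Coef_bound: "f \<in> Coef \<Longrightarrow> \<exists>M. \<forall>q\<in>cone0. \<bar>f q\<bar> \<le> M"
proof (induction f rule: Coef.induct)
  case (cconst c) then show ?case by auto
next
  case (cy b)
  have "\<bar>crd b q / crd 0 q\<bar> \<le> 1" if "q \<in> cone0" for q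
  proof -
    have h: "\<bar>crd b q\<bar> \<le> crd 0 q" "crd 0 q > 0" using that cy unfolding cone0_def by auto
    have "\<bar>crd b q / crd 0 q\<bar> = \<bar>crd b q\<bar> / crd 0 q" using h(2) by simp
    also have "\<dots> \<le> 1" using h by simp
    finally show ?thesis .
  qed
  then show ?case by blast
next
  case cs
  have "\<bar>1 / crd 0 q\<bar> \<le> 1" if "q \<in> cone0" for q
  proof -
    have h: "1 \<le> crd 0 q" using that unfolding cone0_def by auto
    then show ?thesis by simp
  qed
  then show ?case by blast
next
  case (cadd f g)
  then obtain M N where M: "\<forall>q\<in>cone0. \<bar>f q\<bar> \<le> M" and N: "\<forall>q\<in>cone0. \<bar>g q\<bar> \<le> N" by blast
  have "\<bar>f q + g q\<bar> \<le> M + N" if "q \<in> cone0" for q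
  proof -
    have "\<bar>f q\<bar> \<le> M" "\<bar>g q\<bar> \<le> N" using M N that by auto
    then show ?thesis using abs_triangle_ineq[of "f q" "g q"] by linarith
  qed
  then show ?case by blast
next
  case (cmul f g)
  then obtain M N where M: "\<forall>q\<in>cone0. \<bar>f q\<bar> \<le> M" and N: "\<forall>q\<in>cone0. \<bar>g q\<bar> \<le> N" by blast
  have "\<bar>f q * g q\<bar> \<le> M * N" if "q \<in> cone0" for q
  proof -
    have fM: "\<bar>f q\<bar> \<le> M" and gN: "\<bar>g q\<bar> \<le> N" using M N that by auto
    have "0 \<le> M" using fM abs_ge_zero[of "f q"] by linarith
    then have "\<bar>f q\<bar> * \<bar>g q\<bar> \<le> M * N" using fM gN by (intro mult_mono) auto
    then show ?thesis by (simp add: abs_mult)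
  qed
  then show ?case by blast
next
  case (ceq g f)
  then obtain M where M: "\<forall>q\<in>cone0. \<bar>g q\<bar> \<le> M" by blast
  have "\<bar>f q\<bar> \<le> M" if "q \<in> cone0" for q
  proof -
    have "q \<in> Tpos" using that cone0_Tpos by blast
    then have "f q = g q" using ceq.hyps(2) unfolding eqon_def by blast
    then show ?thesis using M that by simp
  qed
  then show ?case by blast
qed

definition sfun :: fn where "sfun q = 1 / crd 0 q"

lemma dpart_s: "q \<in> Tpos \<Longrightarrow> a \<le> 2 \<Longrightarrow> dpart a sfun q = sfun q * (if a = 0 then - sfun q else 0)"
  using dpart_hd[OF s_hd[of q], of a] unfolding Tpos_def sfun_def
  by (auto simp: crd_def ev_def le2_iff power2_eq_square)

lemma dpart_y: "q \<in> Tpos \<Longrightarrow> a \<le> 2 \<Longrightarrow> b \<in> {1,2} \<Longrightarrow>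
  dpart a (\<lambda>q. crd b q / crd 0 q) q = sfun q * ((if a = b then 1 else 0) - (if a = 0 then crd b q / crd 0 q else 0))"
  using dpart_hd[OF y_hd[of q b], of a] unfolding Tpos_def sfun_def
  by (auto simp: crd_def ev_def le2_iff power2_eq_square field_simps)

lemma exCoefI: "g \<in> Coef \<Longrightarrow> eqon Tpos F (\<lambda>q. sfun q * g q) \<Longrightarrow> \<exists>g\<in>Coef. eqon Tpos F (\<lambda>q. sfun q * g q)"
  by blast

lemma Coef_dpart: "f \<in> Coef \<Longrightarrow> a \<le> 2 \<Longrightarrow> \<exists>g\<in>Coef. eqon Tpos (dpart a f) (\<lambda>q. sfun q * g q)"
proof (induction f rule: Coef.induct)
  case (cconst c)
  have "eqon Tpos (dpart a (\<lambda>q. c)) (\<lambda>q. sfun q * 0)" by (simp add: eqon_def dpart_const)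
  then show ?case by (intro bexI[OF _ Coef.cconst[of 0]]) simp
next
  case (cy b)
  have "eqon Tpos (dpart a (\<lambda>q. crd b q / crd 0 q)) (\<lambda>q. sfun q * ((\<lambda>q. (if a = b then 1 else 0)) q + (\<lambda>q. (if a = 0 then -1 else 0)) q * (\<lambda>q. crd b q / crd 0 q) q))"
    using dpart_y[OF _ cy.prems cy.hyps] by (simp add: eqon_def)
  moreover have "(\<lambda>q. (\<lambda>q. (if a = b then 1 else 0)) q + (\<lambda>q. (if a = 0 then -1 else 0)) q * (\<lambda>q. crd b q / crd 0 q) q) \<in> Coef"
    by (intro Coef.cadd Coef.cmul Coef.cconst Coef.cy cy.hyps)
  ultimately show ?case by (rule exCoefI[rotated])
next
  case cs
  have "eqon Tpos (dpart a (\<lambda>q. 1 / crd 0 q)) (\<lambda>q. sfun q * ((\<lambda>q. (if a = 0 then -1 else 0)) q * (\<lambda>q. 1 / crd 0 q) q))"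
    using dpart_s[OF _ cs.prems] unfolding sfun_def by (simp add: eqon_def)
  moreover have "(\<lambda>q. (\<lambda>q. (if a = 0 then -1 else 0)) q * (\<lambda>q. 1 / crd 0 q) q) \<in> Coef"
    by (intro Coef.cmul Coef.cconst Coef.cs)
  ultimately show ?case by (rule exCoefI[rotated])
next
  case (cadd f g)
  then obtain f1 g1 where f1: "f1 \<in> Coef" "eqon Tpos (dpart a f) (\<lambda>q. sfun q * f1 q)"
    and g1: "g1 \<in> Coef" "eqon Tpos (dpart a g) (\<lambda>q. sfun q * g1 q)" by blast
  have "eqon Tpos (dpart a (\<lambda>q. f q + g q)) (\<lambda>q. sfun q * (\<lambda>q. f1 q + g1 q) q)"
    using f1(2) g1(2) dpart_add[OF Coef_diff[OF cadd.hyps(1)] Coef_diff[OF cadd.hyps(2)]]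
    by (simp add: eqon_def algebra_simps)
  then show ?case by (rule exCoefI[OF Coef.cadd[OF f1(1) g1(1)]])
next
  case (cmul f g)
  then obtain f1 g1 where f1: "f1 \<in> Coef" "eqon Tpos (dpart a f) (\<lambda>q. sfun q * f1 q)"
    and g1: "g1 \<in> Coef" "eqon Tpos (dpart a g) (\<lambda>q. sfun q * g1 q)" by blast
  have "eqon Tpos (dpart a (\<lambda>q. f q * g q)) (\<lambda>q. sfun q * (\<lambda>q. f q * g1 q + f1 q * g q) q)"
    using f1(2) g1(2) dpart_mult[OF Coef_diff[OF cmul.hyps(1)] Coef_diff[OF cmul.hyps(2)]]
    by (simp add: eqon_def algebra_simps)
  moreover have "(\<lambda>q. f q * g1 q + f1 q * g q) \<in> Coef"
    using cmul.hyps f1(1) g1(1) by (intro Coef.cadd Coef.cmul)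
  ultimately show ?case by (rule exCoefI[rotated])
next
  case (ceq g f)
  then obtain g1 where g1: "g1 \<in> Coef" "eqon Tpos (dpart a g) (\<lambda>q. sfun q * g1 q)" by blast
  have "eqon Tpos (dpart a f) (dpart a g)"
    using eqon_dpart[OF open_Tpos ceq.hyps(2)] .
  then show ?case using g1 eqon_trans by blast
qed

lemma sfun_Coef: "sfun \<in> Coef" unfolding sfun_def by (rule Coef.cs)

lemma Coef_mulI: "f \<in> Coef \<Longrightarrow> g \<in> Coef \<Longrightarrow> (\<lambda>q. f q * g q) \<in> Coef" by (rule Coef.cmul)

lemma Coef_zapp: "f \<in> Coef \<Longrightarrow> Z \<in> AZ \<Longrightarrow> zapp Z f \<in> Coef"
proof (erule AZ_cases)
  fix a assume f: "f \<in> Coef" and Z: "Z = Dz a" and a: "a \<le> 2"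
  obtain g where g: "g \<in> Coef" "eqon Tpos (dpart a f) (\<lambda>q. sfun q * g q)" using Coef_dpart[OF f a] by blast
  show "zapp Z f \<in> Coef" unfolding Z using Coef.ceq[OF Coef_mulI[OF sfun_Coef g(1)] g(2)] by simp
next
  fix b assume f: "f \<in> Coef" and Z: "Z = Lz b" and b: "b \<in> {1,2}"
  obtain g0 where g0: "g0 \<in> Coef" "eqon Tpos (dpart 0 f) (\<lambda>q. sfun q * g0 q)" using Coef_dpart[OF f, of 0] by auto
  obtain gb where gb: "gb \<in> Coef" "eqon Tpos (dpart b f) (\<lambda>q. sfun q * gb q)" using Coef_dpart[OF f, of b] b by auto
  have "eqon Tpos (boost b f) (\<lambda>q. (\<lambda>q. crd b q / crd 0 q) q * g0 q + gb q)"
    using g0(2) gb(2) unfolding eqon_def boost_def sfun_def Tpos_def by (auto simp: field_simps)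
  moreover have "(\<lambda>q. (\<lambda>q. crd b q / crd 0 q) q * g0 q + gb q) \<in> Coef"
    using b g0(1) gb(1) by (intro Coef.cadd Coef.cmul Coef.cy)
  ultimately show "zapp Z f \<in> Coef" unfolding Z using Coef.ceq by auto
qed

lemma Coef_zapps: "f \<in> Coef \<Longrightarrow> set zs \<subseteq> AZ \<Longrightarrow> zapps zs f \<in> Coef"
  by (induction zs) (auto intro: Coef_zapp)

lemma Coef_smooth: "f \<in> Coef \<Longrightarrow> open V \<Longrightarrow> V \<subseteq> Tpos \<Longrightarrow> smooth_on V f"
proof -
  assume f: "f \<in> Coef" and V: "open V" "V \<subseteq> Tpos"
  have "smooth_on Tpos f"
  proof (rule sm_coind[OF open_Tpos f])
    fix g assume g: "g \<in> Coef"
    have "g differentiable_on Tpos"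
      using Coef_diff[OF g] differentiable_on_eq_differentiable_at[OF open_Tpos] by blast
    moreover have "\<exists>h\<in>Coef. eqon Tpos (dpart a g) h" if "a \<in> {0,1,2}" for a
    proof -
      have "Dz a \<in> AZ" using that unfolding AZ_def by auto
      from Coef_zapp[OF g this] have "dpart a g \<in> Coef" by simp
      then show ?thesis using eqon_refl by blast
    qed
    ultimately show "g differentiable_on Tpos \<and> (\<forall>a\<in>{0,1,2}. \<exists>h\<in>Coef. eqon Tpos (dpart a g) h)" by blast
  qed
  then show ?thesis using sm_subset V(2) by blast
qed

definition Coef1 :: "fn set" where
  "Coef1 = {f. \<exists>g\<in>Coef. eqon Tpos f (\<lambda>q. sfun q * g q)}"

lemma Coef1I: "g \<in> Coef \<Longrightarrow> eqon Tpos f (\<lambda>q. sfun q * g q) \<Longrightarrow> f \<in> Coef1"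
  unfolding Coef1_def by blast

lemma Coef1_Coef: "f \<in> Coef1 \<Longrightarrow> f \<in> Coef"
  unfolding Coef1_def using Coef.ceq Coef_mulI sfun_Coef by blast

lemma Coef1_mul: "c \<in> Coef1 \<Longrightarrow> e \<in> Coef \<Longrightarrow> (\<lambda>q. c q * e q) \<in> Coef1"
proof -
  assume c: "c \<in> Coef1" and e: "e \<in> Coef"
  then obtain g where g: "g \<in> Coef" "eqon Tpos c (\<lambda>q. sfun q * g q)" unfolding Coef1_def by blast
  have "eqon Tpos (\<lambda>q. c q * e q) (\<lambda>q. sfun q * (\<lambda>q. g q * e q) q)"
    using g(2) by (simp add: eqon_def)
  then show ?thesis using Coef1I Coef_mulI[OF g(1) e] by blast
qed

lemma Coef1_mul2: "e \<in> Coef \<Longrightarrow> c \<in> Coef1 \<Longrightarrow> (\<lambda>q. e q * c q) \<in> Coef1"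
  using Coef1_mul[of c e] by (simp add: mult.commute)

lemma Coef1_s: "(\<lambda>q. sfun q * g q) \<in> Coef1" if "g \<in> Coef"
  using Coef1I[OF that eqon_refl] .

lemma Coef1_zapp: "c \<in> Coef1 \<Longrightarrow> Z \<in> AZ \<Longrightarrow> zapp Z c \<in> Coef1"
proof -
  assume c: "c \<in> Coef1" and Z: "Z \<in> AZ"
  then obtain g where g: "g \<in> Coef" "eqon Tpos c (\<lambda>q. sfun q * g q)" unfolding Coef1_def by blast
  have ez: "eqon Tpos (zapp Z c) (zapp Z (\<lambda>q. sfun q * g q))" using eqon_zapp[OF open_Tpos g(2)] .
  have dg: "g differentiable (at q)" "sfun differentiable (at q)" if "q \<in> Tpos" for q
    using Coef_diff[OF g(1) that] Coef_diff[OF sfun_Coef that] by auto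
  have zg: "zapp Z g \<in> Coef" using Coef_zapp[OF g(1) Z] .
  show ?thesis
  proof (rule AZ_cases[OF Z])
    fix a assume Za: "Z = Dz a" and a: "a \<le> 2"
    obtain g1 where g1: "g1 \<in> Coef" "eqon Tpos (dpart a g) (\<lambda>q. sfun q * g1 q)" using Coef_dpart[OF g(1) a] by blast
    have "eqon Tpos (zapp Z (\<lambda>q. sfun q * g q)) (\<lambda>q. sfun q * (\<lambda>q. sfun q * g1 q + (\<lambda>q. if a = 0 then -1 else 0) q * sfun q * g q) q)"
      unfolding eqon_def
    proof
      fix q assume q: "q \<in> Tpos"
      have "zapp Z (\<lambda>q. sfun q * g q) q = sfun q * dpart a g q + dpart a sfun q * g q"
        unfolding Za using dpart_mult[OF dg(2)[OF q] dg(1)[OF q]] by simp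
      also have "\<dots> = sfun q * (sfun q * g1 q + (if a = 0 then -1 else 0) * sfun q * g q)"
        using g1(2) q dpart_s[OF q a] by (simp add: eqon_def algebra_simps)
      finally show "zapp Z (\<lambda>q. sfun q * g q) q = sfun q * (\<lambda>q. sfun q * g1 q + (\<lambda>q. if a = 0 then -1 else 0) q * sfun q * g q) q" by simp
    qed
    moreover have "(\<lambda>q. sfun q * g1 q + (\<lambda>q. if a = 0 then -1 else 0) q * sfun q * g q) \<in> Coef"
      using g1(1) g(1) by (intro Coef.cadd Coef.cmul Coef.cconst sfun_Coef)
    ultimately show ?thesis using ez eqon_trans Coef1I by blast
  next
    fix b assume Zb: "Z = Lz b" and b: "b \<in> {1,2}"
    have "eqon Tpos (zapp Z (\<lambda>q. sfun q * g q)) (\<lambda>q. sfun q * (\<lambda>q. zapp Z g q + (-1) * (\<lambda>q. crd b q / crd 0 q) q * g q) q)"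
      unfolding eqon_def
    proof
      fix q assume q: "q \<in> Tpos"
      have b2: "b \<le> 2" using b by auto
      have "zapp Z (\<lambda>q. sfun q * g q) q = sfun q * boost b g q + boost b sfun q * g q"
        unfolding Zb using boost_mult[OF dg(2)[OF q] dg(1)[OF q]] by simp
      also have "boost b sfun q = - (crd b q / crd 0 q) * sfun q"
      proof -
        have d0: "dpart 0 sfun q = - (1 / crd 0 q) * (1 / crd 0 q)" using dpart_s[OF q, of 0] by (simp add: sfun_def)
        have db: "dpart b sfun q = 0" using dpart_s[OF q b2] b by auto
        show ?thesis unfolding boost_def d0 db sfun_def by simp
      qed
      finally show "zapp Z (\<lambda>q. sfun q * g q) q = sfun q * (\<lambda>q. zapp Z g q + (-1) * (\<lambda>q. crd b q / crd 0 q) q * g q) q"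
        unfolding Zb by (simp add: algebra_simps)
    qed
    moreover have "(\<lambda>q. zapp Z g q + (-1) * (\<lambda>q. crd b q / crd 0 q) q * g q) \<in> Coef"
      using zg g(1) b by (intro Coef.cadd Coef.cmul Coef.cconst Coef.cy)
    ultimately show ?thesis using ez eqon_trans Coef1I by blast
  qed
qed

lemma Coef1_bound: "c \<in> Coef1 \<Longrightarrow> \<exists>M\<ge>0. \<forall>q\<in>cone0. \<bar>c q\<bar> \<le> M / crd 0 q"
proof -
  assume "c \<in> Coef1"
  then obtain g where g: "g \<in> Coef" "eqon Tpos c (\<lambda>q. sfun q * g q)" unfolding Coef1_def by blast
  obtain M where M: "\<forall>q\<in>cone0. \<bar>g q\<bar> \<le> M" using Coef_bound[OF g(1)] by blast
  have "\<bar>c q\<bar> \<le> max M 0 / crd 0 q" if q: "q \<in> cone0" for q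
  proof -
    have t: "crd 0 q > 0" using q unfolding cone0_def by auto
    have qT: "q \<in> Tpos" using q cone0_Tpos by blast
    have "c q = sfun q * g q" using g(2) qT unfolding eqon_def by blast
    then have "c q = g q / crd 0 q" unfolding sfun_def by simp
    then have "\<bar>c q\<bar> = \<bar>g q\<bar> / crd 0 q" using t by simp
    also have "\<dots> \<le> max M 0 / crd 0 q"
    proof (rule divide_right_mono)
      show "\<bar>g q\<bar> \<le> max M 0" using M q by fastforce
    qed (use t in simp)
    finally show ?thesis .
  qed
  then show ?thesis by (intro exI[of _ "max M 0"]) auto
qed

lemma Coef1_neg: "c \<in> Coef1 \<Longrightarrow> (\<lambda>q. - c q) \<in> Coef1"
  using Coef1_mul[of c "\<lambda>q. -1"] Coef.cconst by simp



definition Lc :: "zop list \<Rightarrow> nat" where "Lc zs = length (filter is_Lz zs)"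

lemma Lc_Nil[simp]: "Lc [] = 0" and Lc_Cons[simp]: "Lc (Z # zs) = (if is_Lz Z then 1 else 0) + Lc zs"
  by (auto simp: Lc_def)

lemma ZK_iff: "zs \<in> ZK p k \<longleftrightarrow> set zs \<subseteq> AZ \<and> length zs \<le> p \<and> Lc zs \<le> k"
  unfolding ZK_def AZ_def Lc_def by auto

lemma sum_list_concat_map: "(\<Sum>x\<leftarrow>concat (map g xs). f x) = (\<Sum>y\<leftarrow>xs. \<Sum>x\<leftarrow>g y. f x)"
  by (induction xs) auto

lemma sum_list_map_cong: "(\<And>x. x \<in> set xs \<Longrightarrow> f x = g x) \<Longrightarrow> (\<Sum>x\<leftarrow>xs. f x) = (\<Sum>x\<leftarrow>xs. g x)"
  by (metis map_cong)

type_synonym gterm = "fn \<times> zop list \<times> nat"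

definition gev :: "fn \<Rightarrow> gterm list \<Rightarrow> fn" where
  "gev u ts q = (\<Sum>(e,B,d)\<leftarrow>ts. e q * zapps B (dpart d u) q)"

definition gok :: "nat \<Rightarrow> nat \<Rightarrow> gterm list \<Rightarrow> bool" where
  "gok p k ts \<longleftrightarrow> (\<forall>(e,B,d)\<in>set ts. e \<in> Coef \<and> B \<in> ZK p k \<and> d \<le> 2)"

definition cond :: "pt set \<Rightarrow> fn \<Rightarrow> bool" where
  "cond V u \<longleftrightarrow> open V \<and> V \<subseteq> Tpos \<and> smooth_on V u"

definition GRep :: "nat \<Rightarrow> nat \<Rightarrow> (fn \<Rightarrow> fn) \<Rightarrow> bool" where
  "GRep p k F \<longleftrightarrow> (\<exists>ts. gok p k ts \<and> (\<forall>V u. cond V u \<longrightarrow> eqon V (F u) (gev u ts)))"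

lemma GRepI: "gok p k ts \<Longrightarrow> (\<And>V u. cond V u \<Longrightarrow> eqon V (F u) (gev u ts)) \<Longrightarrow> GRep p k F"
  unfolding GRep_def by blast

lemma GRepE: "GRep p k F \<Longrightarrow> (\<And>ts. gok p k ts \<Longrightarrow> (\<And>V u. cond V u \<Longrightarrow> eqon V (F u) (gev u ts)) \<Longrightarrow> P) \<Longrightarrow> P"
  unfolding GRep_def by blast

lemma ZK_mono: "B \<in> ZK p k \<Longrightarrow> p \<le> p' \<Longrightarrow> k \<le> k' \<Longrightarrow> B \<in> ZK p' k'"
  unfolding ZK_iff by auto

lemma gok_mono: "gok p k ts \<Longrightarrow> p \<le> p' \<Longrightarrow> k \<le> k' \<Longrightarrow> gok p' k' ts"
  unfolding gok_def using ZK_mono by fast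

lemma GRep_mono: "GRep p k F \<Longrightarrow> p \<le> p' \<Longrightarrow> k \<le> k' \<Longrightarrow> GRep p' k' F"
  unfolding GRep_def using gok_mono by blast

lemma GRep_eq: "GRep p k F \<Longrightarrow> (\<And>V u. cond V u \<Longrightarrow> eqon V (G u) (F u)) \<Longrightarrow> GRep p k G"
  unfolding GRep_def using eqon_trans by blast

lemma cond_open: "cond V u \<Longrightarrow> open V" and cond_sub: "cond V u \<Longrightarrow> V \<subseteq> Tpos"
  and cond_sm: "cond V u \<Longrightarrow> smooth_on V u"
  unfolding cond_def by auto

lemma gterm_smooth:
  assumes "cond V u" "e \<in> Coef" "set B \<subseteq> AZ" "d \<le> 2"
  shows "smooth_on V (\<lambda>q. e q * zapps B (dpart d u) q)"
proof -
  have V: "open V" and sub: "V \<subseteq> Tpos" and smu: "smooth_on V u" using assms(1) unfolding cond_def by auto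
  show ?thesis by (rule sm_mult[OF V Coef_smooth[OF assms(2) V sub] sm_zapps[OF V sm_dpart[OF smu assms(4)] assms(3)]])
qed

lemma gev_smooth:
  assumes c: "cond V u" and g: "gok p k ts"
  shows "smooth_on V (gev u ts)"
proof -
  have "smooth_on V (\<lambda>q. \<Sum>x\<leftarrow>ts. (\<lambda>(e,B,d) q. e q * zapps B (dpart d u) q) x q)"
  proof (rule sm_sum_list[OF cond_open[OF c]], rule ballI)
    fix x assume x: "x \<in> set ts"
    obtain e B d where xe: "x = (e,B,d)" by (cases x)
    have "e \<in> Coef" "set B \<subseteq> AZ" "d \<le> 2" using g x unfolding gok_def xe ZK_iff by auto
    then show "smooth_on V ((\<lambda>(e,B,d) q. e q * zapps B (dpart d u) q) x)"
      unfolding xe using gterm_smooth[OF c] by simp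
  qed
  then show ?thesis unfolding gev_def by (simp add: case_prod_beta')
qed

lemma GRep_zero: "GRep p k (\<lambda>u q. 0)"
  by (rule GRepI[of p k "[]"]) (auto simp: gok_def gev_def eqon_def)

lemma GRep_add: "GRep p k F \<Longrightarrow> GRep p k G \<Longrightarrow> GRep p k (\<lambda>u q. F u q + G u q)"
proof -
  assume "GRep p k F" "GRep p k G"
  then obtain ts1 ts2 where t1: "gok p k ts1" "\<And>V u. cond V u \<Longrightarrow> eqon V (F u) (gev u ts1)"
    and t2: "gok p k ts2" "\<And>V u. cond V u \<Longrightarrow> eqon V (G u) (gev u ts2)"
    by (meson GRepE)
  show ?thesis
  proof (rule GRepI[of p k "ts1 @ ts2"])
    show "gok p k (ts1 @ ts2)" using t1(1) t2(1) unfolding gok_def by auto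
  next
    fix V u assume "cond V u"
    then show "eqon V (\<lambda>q. F u q + G u q) (gev u (ts1 @ ts2))"
      using t1(2) t2(2) unfolding eqon_def gev_def by auto
  qed
qed

lemma GRep_scale: "e' \<in> Coef \<Longrightarrow> GRep p k F \<Longrightarrow> GRep p k (\<lambda>u q. e' q * F u q)"
proof -
  assume e': "e' \<in> Coef" and "GRep p k F"
  then obtain ts where t: "gok p k ts" "\<And>V u. cond V u \<Longrightarrow> eqon V (F u) (gev u ts)"
    by (meson GRepE)
  show ?thesis
  proof (rule GRepI[of p k "map (\<lambda>(e,B,d). (\<lambda>q. e' q * e q, B, d)) ts"])
    show "gok p k (map (\<lambda>(e,B,d). (\<lambda>q. e' q * e q, B, d)) ts)"
      using t(1) e' unfolding gok_def by (auto intro: Coef_mulI)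
  next
    fix V u assume "cond V u"
    then have "eqon V (F u) (gev u ts)" using t(2) by blast
    moreover have "e' q * gev u ts q = gev u (map (\<lambda>(e,B,d). (\<lambda>q. e' q * e q, B, d)) ts) q" for q
      unfolding gev_def by (induction ts) (auto simp: algebra_simps)
    ultimately show "eqon V (\<lambda>q. e' q * F u q) (gev u (map (\<lambda>(e,B,d). (\<lambda>q. e' q * e q, B, d)) ts))"
      unfolding eqon_def by auto
  qed
qed

lemma GRep_neg: "GRep p k F \<Longrightarrow> GRep p k (\<lambda>u q. - F u q)"
  using GRep_scale[of "\<lambda>q. -1" p k F] Coef.cconst by simp

lemma GRep_diff: "GRep p k F \<Longrightarrow> GRep p k G \<Longrightarrow> GRep p k (\<lambda>u q. F u q - G u q)"
  using GRep_add[of p k F "\<lambda>u q. - G u q"] GRep_neg[of p k G] by simp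

lemma GRep_atom: "B \<in> ZK p k \<Longrightarrow> d \<le> 2 \<Longrightarrow> GRep p k (\<lambda>u. zapps B (dpart d u))"
  by (rule GRepI[of p k "[(\<lambda>q. 1, B, d)]"]) (auto simp: gok_def gev_def eqon_def intro: Coef.cconst)

lemma zapp_gterm:
  assumes c: "cond V u" and e: "e \<in> Coef" and B: "set B \<subseteq> AZ" and d: "d \<le> 2" and q: "q \<in> V"
  shows "zapp Z (\<lambda>q. e q * zapps B (dpart d u) q) q = e q * zapps (Z # B) (dpart d u) q + zapp Z e q * zapps B (dpart d u) q"
proof -
  have V: "open V" using c cond_open by blast
  have "e differentiable (at q)" using Coef_diff[OF e] q cond_sub[OF c] by blast
  moreover have "zapps B (dpart d u) differentiable (at q)"
    using sm_diff_at[OF V sm_zapps[OF V sm_dpart[OF cond_sm[OF c] d] B] q] .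
  ultimately show ?thesis using zapp_mult by simp
qed

lemma GRep_zapp:
  assumes G: "GRep p k F" and Z: "Z \<in> AZ"
  shows "GRep (Suc p) ((if is_Lz Z then 1 else 0) + k) (\<lambda>u. zapp Z (F u))"
proof -
  obtain ts where t: "gok p k ts" "\<And>V u. cond V u \<Longrightarrow> eqon V (F u) (gev u ts)"
    using G by (meson GRepE)
  define ts' where "ts' = concat (map (\<lambda>(e,B,d). [(e, Z # B, d), (zapp Z e, B, d)]) ts)"
  show ?thesis
  proof (rule GRepI[of _ _ ts'])
    show "gok (Suc p) ((if is_Lz Z then 1 else 0) + k) ts'"
      unfolding gok_def
    proof
      fix x assume "x \<in> set ts'"
      then obtain y where y: "y \<in> set ts" and x: "x \<in> set ((\<lambda>(e,B,d). [(e, Z # B, d), (zapp Z e, B, d)]) y)"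
        unfolding ts'_def by auto
      obtain e B d where ye: "y = (e,B,d)" by (cases y)
      have h: "e \<in> Coef" "set B \<subseteq> AZ" "length B \<le> p" "Lc B \<le> k" "d \<le> 2"
        using t(1) y unfolding gok_def ye ZK_iff by auto
      have "x = (e, Z # B, d) \<or> x = (zapp Z e, B, d)" using x unfolding ye by auto
      then show "case x of (e, B, d) \<Rightarrow> e \<in> Coef \<and> B \<in> ZK (Suc p) ((if is_Lz Z then 1 else 0) + k) \<and> d \<le> 2"
      proof
        assume "x = (e, Z # B, d)"
        then show ?thesis using h Z unfolding ZK_iff by auto
      next
        assume "x = (zapp Z e, B, d)"
        then show ?thesis using h Z Coef_zapp[OF h(1) Z] unfolding ZK_iff by auto
      qed
    qed
  next
    fix V u assume c: "cond V u"
    have V: "open V" using c cond_open by blast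
    show "eqon V (zapp Z (F u)) (gev u ts')"
      unfolding eqon_def
    proof
      fix q assume q: "q \<in> V"
      have "zapp Z (F u) q = zapp Z (gev u ts) q"
        by (rule zapp_local[OF V q]) (use t(2)[OF c] in \<open>simp add: eqon_def\<close>)
      also have "\<dots> = zapp Z (\<lambda>q. \<Sum>x\<leftarrow>ts. (\<lambda>(e,B,d) q. e q * zapps B (dpart d u) q) x q) q"
        unfolding gev_def by (simp add: case_prod_beta')
      also have "\<dots> = (\<Sum>x\<leftarrow>ts. zapp Z ((\<lambda>(e,B,d) q. e q * zapps B (dpart d u) q) x) q)"
      proof (rule zapp_sum_list, rule ballI)
        fix x assume x: "x \<in> set ts"
        obtain e B d where xe: "x = (e,B,d)" by (cases x)
        have "e \<in> Coef" "set B \<subseteq> AZ" "d \<le> 2" using t(1) x unfolding gok_def xe ZK_iff by auto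
        then show "(\<lambda>(e,B,d) q. e q * zapps B (dpart d u) q) x differentiable (at q)"
          unfolding xe using sm_diff_at[OF V gterm_smooth[OF c] q] by simp
      qed
      also have "\<dots> = (\<Sum>x\<leftarrow>ts. \<Sum>(e,B,d)\<leftarrow>(\<lambda>(e,B,d). [(e, Z # B, d), (zapp Z e, B, d)]) x. e q * zapps B (dpart d u) q)"
      proof (rule sum_list_map_cong)
        fix x assume x: "x \<in> set ts"
        obtain e B d where xe: "x = (e,B,d)" by (cases x)
        have "e \<in> Coef" "set B \<subseteq> AZ" "d \<le> 2" using t(1) x unfolding gok_def xe ZK_iff by auto
        then show "zapp Z ((\<lambda>(e,B,d) q. e q * zapps B (dpart d u) q) x) q =
          (\<Sum>(e,B,d)\<leftarrow>(\<lambda>(e,B,d). [(e, Z # B, d), (zapp Z e, B, d)]) x. e q * zapps B (dpart d u) q)"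
          unfolding xe using zapp_gterm[OF c _ _ _ q] by simp
      qed
      also have "\<dots> = gev u ts' q"
        unfolding gev_def ts'_def sum_list_concat_map ..
      finally show "zapp Z (F u) q = gev u ts' q" .
    qed
  qed
qed



lemma G4: "set K \<subseteq> AZ \<Longrightarrow> g \<le> 2 \<Longrightarrow> GRep (length K) (Lc K) (\<lambda>u. dpart g (zapps K u))"
proof (induction K arbitrary: g)
  case Nil
  have "[] \<in> ZK 0 0" unfolding ZK_iff by simp
  then show ?case using GRep_atom[of "[]" 0 0 g] Nil by simp
next
  case (Cons Z K)
  have Z: "Z \<in> AZ" and K: "set K \<subseteq> AZ" using Cons.prems by auto
  show ?case
  proof (rule AZ_cases[OF Z])
    fix a assume Za: "Z = Dz a" and a: "a \<le> 2"
    have "GRep (Suc (length K)) ((if is_Lz Z then 1 else 0) + Lc K) (\<lambda>u. zapp Z (dpart g (zapps K u)))"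
      using GRep_zapp[OF Cons.IH[OF K Cons.prems(2)] Z] .
    then have G: "GRep (length (Z # K)) (Lc (Z # K)) (\<lambda>u. zapp Z (dpart g (zapps K u)))" by simp
    show ?thesis
    proof (rule GRep_eq[OF G])
      fix V u assume c: "cond V u"
      have sm: "smooth_on V (zapps K u)" using sm_zapps[OF cond_open[OF c] cond_sm[OF c] K] .
      show "eqon V (dpart g (zapps (Z # K) u)) (zapp Z (dpart g (zapps K u)))"
        unfolding eqon_def Za using schwarz[OF cond_open[OF c] sm a Cons.prems(2)] by simp
    qed
  next
    fix b assume Zb: "Z = Lz b" and b: "b \<in> {1,2}"
    have b2: "b \<le> 2" using b by auto
    have G1: "GRep (Suc (length K)) (1 + Lc K) (\<lambda>u. zapp Z (dpart g (zapps K u)))"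
      using GRep_zapp[OF Cons.IH[OF K Cons.prems(2)] Z] Zb by simp
    have G2: "GRep (Suc (length K)) (1 + Lc K) (\<lambda>u q. if g = b then dpart 0 (zapps K u) q else 0)"
    proof (cases "g = b")
      case True
      then show ?thesis using GRep_mono[OF Cons.IH[OF K, of 0]] by simp
    next
      case False
      then show ?thesis using GRep_zero by simp
    qed
    have G3: "GRep (Suc (length K)) (1 + Lc K) (\<lambda>u q. if g = 0 then dpart b (zapps K u) q else 0)"
    proof (cases "g = 0")
      case True
      then show ?thesis using GRep_mono[OF Cons.IH[OF K b2]] by simp
    next
      case False
      then show ?thesis using GRep_zero by simp
    qed
    have G: "GRep (length (Z # K)) (Lc (Z # K)) (\<lambda>u q. zapp Z (dpart g (zapps K u)) q
       + (if g = b then dpart 0 (zapps K u) q else 0) + (if g = 0 then dpart b (zapps K u) q else 0))"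
      using GRep_add[OF GRep_add[OF G1 G2] G3] Zb by simp
    show ?thesis
    proof (rule GRep_eq[OF G])
      fix V u assume c: "cond V u"
      have sm: "smooth_on V (zapps K u)" using sm_zapps[OF cond_open[OF c] cond_sm[OF c] K] .
      show "eqon V (dpart g (zapps (Z # K) u)) (\<lambda>q. zapp Z (dpart g (zapps K u)) q
       + (if g = b then dpart 0 (zapps K u) q else 0) + (if g = 0 then dpart b (zapps K u) q else 0))"
        unfolding eqon_def Zb using comm_dL[OF cond_open[OF c] sm _ Cons.prems(2) b2] Zb by simp
    qed
  qed
qed

type_synonym fterm = "fn \<times> zop list \<times> nat \<times> nat \<times> zop list \<times> nat"

definition fev :: "fn \<Rightarrow> (nat \<Rightarrow> nat \<Rightarrow> fn) \<Rightarrow> fterm list \<Rightarrow> fn" where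
  "fev u H ts q = (\<Sum>(c,A,a,b,B,g)\<leftarrow>ts. c q * zapps A (H a b) q * zapps B (dpart g u) q)"

definition adm :: "nat \<Rightarrow> nat \<Rightarrow> zop list \<Rightarrow> zop list \<Rightarrow> bool" where
  "adm p k A B \<longleftrightarrow> (\<exists>p1<p. \<exists>k1\<le>k. A \<in> ZK (p - p1) (k - k1) \<and> B \<in> ZK (Suc p1) (Suc k1))"

definition fok :: "nat \<Rightarrow> nat \<Rightarrow> fterm list \<Rightarrow> bool" where
  "fok p k ts \<longleftrightarrow> (\<forall>(c,A,a,b,B,g)\<in>set ts. c \<in> Coef1 \<and> a \<le> 2 \<and> b \<le> 2 \<and> g \<le> 2 \<and> adm p k A B)"

definition condH :: "pt set \<Rightarrow> fn \<Rightarrow> (nat \<Rightarrow> nat \<Rightarrow> fn) \<Rightarrow> bool" where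
  "condH V u H \<longleftrightarrow> cond V u \<and> (\<forall>a\<le>2. \<forall>b\<le>2. smooth_on V (H a b))"

definition FRep :: "nat \<Rightarrow> nat \<Rightarrow> (fn \<Rightarrow> (nat \<Rightarrow> nat \<Rightarrow> fn) \<Rightarrow> fn) \<Rightarrow> bool" where
  "FRep p k D \<longleftrightarrow> (\<exists>ts. fok p k ts \<and> (\<forall>V u H. condH V u H \<longrightarrow> eqon V (D u H) (fev u H ts)))"

lemma FRepI: "fok p k ts \<Longrightarrow> (\<And>V u H. condH V u H \<Longrightarrow> eqon V (D u H) (fev u H ts)) \<Longrightarrow> FRep p k D"
  unfolding FRep_def by blast

lemma FRepE: "FRep p k D \<Longrightarrow> (\<And>ts. fok p k ts \<Longrightarrow> (\<And>V u H. condH V u H \<Longrightarrow> eqon V (D u H) (fev u H ts)) \<Longrightarrow> P) \<Longrightarrow> P"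
  unfolding FRep_def by blast

lemma FRep_eq: "FRep p k D \<Longrightarrow> (\<And>V u H. condH V u H \<Longrightarrow> eqon V (E u H) (D u H)) \<Longrightarrow> FRep p k E"
  unfolding FRep_def using eqon_trans by blast

lemma FRep_zero: "FRep p k (\<lambda>u H q. 0)"
  by (rule FRepI[of p k "[]"]) (auto simp: fok_def fev_def eqon_def)

lemma FRep_add: "FRep p k D \<Longrightarrow> FRep p k E \<Longrightarrow> FRep p k (\<lambda>u H q. D u H q + E u H q)"
proof -
  assume "FRep p k D" "FRep p k E"
  then obtain ts1 where t1: "fok p k ts1" "\<And>V u H. condH V u H \<Longrightarrow> eqon V (D u H) (fev u H ts1)"
    unfolding FRep_def by blast
  obtain ts2 where t2: "fok p k ts2" "\<And>V u H. condH V u H \<Longrightarrow> eqon V (E u H) (fev u H ts2)"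
    using \<open>FRep p k E\<close> unfolding FRep_def by blast
  show ?thesis
  proof (rule FRepI[of p k "ts1 @ ts2"])
    show "fok p k (ts1 @ ts2)" using t1(1) t2(1) unfolding fok_def by auto
  next
    fix V u H assume "condH V u H"
    then show "eqon V (\<lambda>q. D u H q + E u H q) (fev u H (ts1 @ ts2))"
      using t1(2) t2(2) unfolding eqon_def fev_def by auto
  qed
qed

lemma FRep_sum_list: "(\<And>j. j \<in> set js \<Longrightarrow> FRep p k (D j)) \<Longrightarrow> FRep p k (\<lambda>u H q. \<Sum>j\<leftarrow>js. D j u H q)"
proof (induction js)
  case Nil then show ?case using FRep_zero by simp
next
  case (Cons j js)
  then show ?case using FRep_add[of p k "D j" "\<lambda>u H q. \<Sum>j\<leftarrow>js. D j u H q"] by simp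
qed

lemma adm_ZA:
  assumes "adm p k A B" "Z \<in> AZ"
  shows "adm (Suc p) ((if is_Lz Z then 1 else 0) + k) (Z # A) B"
proof -
  obtain p1 k1 where h: "p1 < p" "k1 \<le> k" "A \<in> ZK (p-p1) (k-k1)" "B \<in> ZK (Suc p1) (Suc k1)"
    using assms(1) unfolding adm_def by blast
  have "p1 < Suc p" "k1 \<le> (if is_Lz Z then 1 else 0) + k" using h by auto
  moreover have "Z # A \<in> ZK (Suc p - p1) ((if is_Lz Z then 1 else 0) + k - k1)"
    using h(1-3) assms(2) unfolding ZK_iff by auto
  ultimately show ?thesis using h(4) unfolding adm_def by blast
qed

lemma adm_ZB:
  assumes "adm p k A B" "Z \<in> AZ"
  shows "adm (Suc p) ((if is_Lz Z then 1 else 0) + k) A (Z # B)"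
proof -
  obtain p1 k1 where h: "p1 < p" "k1 \<le> k" "A \<in> ZK (p-p1) (k-k1)" "B \<in> ZK (Suc p1) (Suc k1)"
    using assms(1) unfolding adm_def by blast
  have "Suc p1 < Suc p" "(if is_Lz Z then 1 else 0) + k1 \<le> (if is_Lz Z then 1 else 0) + k" using h by auto
  moreover have "A \<in> ZK (Suc p - Suc p1) ((if is_Lz Z then 1 else 0) + k - ((if is_Lz Z then 1 else 0) + k1))"
    using h(3) by simp
  moreover have "Z # B \<in> ZK (Suc (Suc p1)) (Suc ((if is_Lz Z then 1 else 0) + k1))"
    using h(4) assms(2) unfolding ZK_iff by auto
  ultimately show ?thesis unfolding adm_def by blast
qed

lemma adm_c:
  assumes "adm p k A B"
  shows "adm (Suc p) (z + k) A B"
proof -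
  obtain p1 k1 where h: "p1 < p" "k1 \<le> k" "A \<in> ZK (p-p1) (k-k1)" "B \<in> ZK (Suc p1) (Suc k1)"
    using assms(1) unfolding adm_def by blast
  have "p1 < Suc p" "k1 \<le> z + k" using h by auto
  moreover have "A \<in> ZK (Suc p - p1) (z + k - k1)"
    using h(1-3) unfolding ZK_iff by auto
  ultimately show ?thesis using h(4) unfolding adm_def by blast
qed

lemma fterm_parts:
  assumes c: "condH V u H" and cc: "c \<in> Coef1" and a: "a \<le> 2" and b: "b \<le> 2" and g: "g \<le> 2"
    and A: "set A \<subseteq> AZ" and B: "set B \<subseteq> AZ" and q: "q \<in> V"
  shows "c differentiable (at q)" "zapps A (H a b) differentiable (at q)" "zapps B (dpart g u) differentiable (at q)"
    "smooth_on V c" "smooth_on V (zapps A (H a b))" "smooth_on V (zapps B (dpart g u))"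
proof -
  have V: "open V" and sub: "V \<subseteq> Tpos" and smu: "smooth_on V u" and smH: "smooth_on V (H a b)"
    using c a b unfolding condH_def cond_def by auto
  show s1: "smooth_on V c" using Coef_smooth[OF Coef1_Coef[OF cc] V sub] .
  show s2: "smooth_on V (zapps A (H a b))" using sm_zapps[OF V smH A] .
  show s3: "smooth_on V (zapps B (dpart g u))" using sm_zapps[OF V sm_dpart[OF smu g] B] .
  show "c differentiable (at q)" using sm_diff_at[OF V s1 q] .
  show "zapps A (H a b) differentiable (at q)" using sm_diff_at[OF V s2 q] .
  show "zapps B (dpart g u) differentiable (at q)" using sm_diff_at[OF V s3 q] .
qed

lemma zapp_mult3:
  fixes c X Y :: fn
  assumes "c differentiable (at q)" "X differentiable (at q)" "Y differentiable (at q)"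
  shows "zapp Z (\<lambda>q. c q * X q * Y q) q = zapp Z c q * X q * Y q + c q * zapp Z X q * Y q + c q * X q * zapp Z Y q"
proof -
  have "(\<lambda>q. c q * X q) differentiable (at q)" using diff_mult_at assms by blast
  then have "zapp Z (\<lambda>q. c q * X q * Y q) q = c q * X q * zapp Z Y q + zapp Z (\<lambda>q. c q * X q) q * Y q"
    using zapp_mult[of "\<lambda>q. c q * X q" q Y Z] assms(3) by simp
  also have "zapp Z (\<lambda>q. c q * X q) q = c q * zapp Z X q + zapp Z c q * X q"
    using zapp_mult[OF assms(1,2)] .
  finally show ?thesis by (simp add: algebra_simps)
qed

lemma FRep_zapp:
  assumes F: "FRep p k D" and Z: "Z \<in> AZ"
  shows "FRep (Suc p) ((if is_Lz Z then 1 else 0) + k) (\<lambda>u H. zapp Z (D u H))"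
proof -
  obtain ts where t: "fok p k ts" "\<And>V u H. condH V u H \<Longrightarrow> eqon V (D u H) (fev u H ts)"
    using F by (meson FRepE)
  define f3 :: "fterm \<Rightarrow> fterm list" where "f3 = (\<lambda>(c,A,a,b,B,g). [(zapp Z c, A, a, b, B, g), (c, Z # A, a, b, B, g), (c, A, a, b, Z # B, g)])"
  define ts' where "ts' = concat (map f3 ts)"
  have tok: "c \<in> Coef1 \<and> a \<le> 2 \<and> b \<le> 2 \<and> g \<le> 2 \<and> adm p k A B \<and> set A \<subseteq> AZ \<and> set B \<subseteq> AZ"
    if "(c,A,a,b,B,g) \<in> set ts" for c A a b B g
  proof -
    have h: "c \<in> Coef1 \<and> a \<le> 2 \<and> b \<le> 2 \<and> g \<le> 2 \<and> adm p k A B" using t(1) that unfolding fok_def by fastforce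
    then show ?thesis unfolding adm_def ZK_iff by blast
  qed
  show ?thesis
  proof (rule FRepI[of _ _ ts'])
    show "fok (Suc p) ((if is_Lz Z then 1 else 0) + k) ts'"
      unfolding fok_def
    proof
      fix x assume "x \<in> set ts'"
      then obtain y where y: "y \<in> set ts" and x: "x \<in> set (f3 y)"
        unfolding ts'_def by auto
      obtain c A a b B g where ye: "y = (c,A,a,b,B,g)" by (cases y)
      have h: "c \<in> Coef1" "a \<le> 2" "b \<le> 2" "g \<le> 2" "adm p k A B" using tok y ye by auto
      have "x = (zapp Z c, A, a, b, B, g) \<or> x = (c, Z # A, a, b, B, g) \<or> x = (c, A, a, b, Z # B, g)"
        using x unfolding ye f3_def by auto
      then show "case x of (c,A,a,b,B,g) \<Rightarrow> c \<in> Coef1 \<and> a \<le> 2 \<and> b \<le> 2 \<and> g \<le> 2 \<and> adm (Suc p) ((if is_Lz Z then 1 else 0) + k) A B"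
        using h Coef1_zapp[OF h(1) Z] adm_ZA[OF h(5) Z] adm_ZB[OF h(5) Z] adm_c[OF h(5), of "if is_Lz Z then 1 else 0"] by auto
    qed
  next
    fix V u H assume c: "condH V u H"
    have V: "open V" using c unfolding condH_def cond_def by blast
    show "eqon V (zapp Z (D u H)) (fev u H ts')"
      unfolding eqon_def
    proof
      fix q assume q: "q \<in> V"
      let ?T = "\<lambda>(c,A,a,b,B,g) q. c q * zapps A (H a b) q * zapps B (dpart g u) q"
      have "zapp Z (D u H) q = zapp Z (fev u H ts) q"
        by (rule zapp_local[OF V q]) (use t(2)[OF c] in \<open>simp add: eqon_def\<close>)
      also have "\<dots> = zapp Z (\<lambda>q. \<Sum>x\<leftarrow>ts. ?T x q) q"
        unfolding fev_def by (simp add: case_prod_beta')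
      also have "\<dots> = (\<Sum>x\<leftarrow>ts. zapp Z (?T x) q)"
      proof (rule zapp_sum_list, rule ballI)
        fix x assume x: "x \<in> set ts"
        obtain cc A a b B g where xe: "x = (cc,A,a,b,B,g)" by (cases x)
        have h: "cc \<in> Coef1" "a \<le> 2" "b \<le> 2" "g \<le> 2" "set A \<subseteq> AZ" "set B \<subseteq> AZ" using tok x xe by auto
        note fp = fterm_parts[OF c h(1-4) h(5,6) q]
        show "?T x differentiable (at q)"
          unfolding xe using diff_mult_at[OF diff_mult_at[OF fp(1,2)] fp(3)] by simp
      qed
      also have "\<dots> = (\<Sum>x\<leftarrow>ts. \<Sum>y\<leftarrow>f3 x. ?T y q)"
      proof (rule sum_list_map_cong)
        fix x assume x: "x \<in> set ts"
        obtain cc A a b B g where xe: "x = (cc,A,a,b,B,g)" by (cases x)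
        have h: "cc \<in> Coef1" "a \<le> 2" "b \<le> 2" "g \<le> 2" "set A \<subseteq> AZ" "set B \<subseteq> AZ" using tok x xe by auto
        note fp = fterm_parts[OF c h(1-4) h(5,6) q]
        show "zapp Z (?T x) q = (\<Sum>y\<leftarrow>f3 x. ?T y q)"
          unfolding xe f3_def using zapp_mult3[OF fp(1-3), of Z] by simp
      qed
      also have "\<dots> = fev u H ts' q"
        unfolding fev_def ts'_def sum_list_concat_map by (simp add: case_prod_beta')
      finally show "zapp Z (D u H) q = fev u H ts' q" .
    qed
  qed
qed

lemma G_to_F:
  assumes c: "c \<in> Coef1" and a: "a \<le> 2" and b: "b \<le> 2" and G: "GRep p' k' F"
    and ad: "\<And>B. B \<in> ZK p' k' \<Longrightarrow> adm p k A B"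
  shows "FRep p k (\<lambda>u H q. c q * zapps A (H a b) q * F u q)"
proof -
  obtain ts where t: "gok p' k' ts" "\<And>V u. cond V u \<Longrightarrow> eqon V (F u) (gev u ts)"
    using G by (meson GRepE)
  define ts' where "ts' = map (\<lambda>(e,B,g). (\<lambda>q. c q * e q, A, a, b, B, g)) ts"
  show ?thesis
  proof (rule FRepI[of _ _ ts'])
    show "fok p k ts'"
      unfolding fok_def ts'_def using t(1) c a b ad unfolding gok_def by (auto intro: Coef1_mul)
  next
    fix V u H assume ch: "condH V u H"
    then have cu: "cond V u" unfolding condH_def by blast
    have "c q * zapps A (H a b) q * gev u ts q = fev u H ts' q" for q
      unfolding gev_def fev_def ts'_def by (induction ts) (auto simp: algebra_simps)
    then show "eqon V (\<lambda>q. c q * zapps A (H a b) q * F u q) (fev u H ts')"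
      using t(2)[OF cu] unfolding eqon_def by auto
  qed
qed

lemma adm_nil: "B \<in> ZK (Suc p) (Suc k) \<Longrightarrow> adm (Suc p) k [] B"
  unfolding adm_def ZK_iff by (rule exI[of _ p], simp, rule exI[of _ k], simp)

lemma adm_one:
  assumes "Z \<in> AZ" "B \<in> ZK (Suc p) (Suc k)"
  shows "adm (Suc p) ((if is_Lz Z then 1 else 0) + k) [Z] B"
proof -
  have "p < Suc p" "k \<le> (if is_Lz Z then 1 else 0) + k" by auto
  moreover have "[Z] \<in> ZK (Suc p - p) ((if is_Lz Z then 1 else 0) + k - k)"
    using assms(1) unfolding ZK_iff by auto
  ultimately show ?thesis using assms(2) unfolding adm_def by blast
qed



definition Yok :: "zop list \<Rightarrow> bool" where "Yok Y \<longleftrightarrow> Y = [] \<or> Y = [Lz 1] \<or> Y = [Lz 2]"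

type_synonym hterm = "fn \<times> nat \<times> nat \<times> zop list \<times> nat"

definition hev :: "(nat \<Rightarrow> nat \<Rightarrow> fn) \<Rightarrow> fn \<Rightarrow> hterm list \<Rightarrow> fn" where
  "hev H w hs q = (\<Sum>(c,a,b,Y,g)\<leftarrow>hs. c q * H a b q * zapps Y (dpart g w) q)"

definition hok :: "hterm list \<Rightarrow> bool" where
  "hok hs \<longleftrightarrow> (\<forall>(c,a,b,Y,g)\<in>set hs. c \<in> Coef1 \<and> a \<le> 2 \<and> b \<le> 2 \<and> g \<le> 2 \<and> Yok Y)"

definition HRep :: "((nat \<Rightarrow> nat \<Rightarrow> fn) \<Rightarrow> fn \<Rightarrow> fn) \<Rightarrow> bool" where
  "HRep F \<longleftrightarrow> (\<exists>hs. hok hs \<and> (\<forall>V w H. cond V w \<longrightarrow> eqon V (F H w) (hev H w hs)))"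

lemma HRep_zero: "HRep (\<lambda>H w q. 0)"
  unfolding HRep_def by (rule exI[of _ "[]"]) (auto simp: hok_def hev_def eqon_def)

lemma HRep_add: "HRep F \<Longrightarrow> HRep G \<Longrightarrow> HRep (\<lambda>H w q. F H w q + G H w q)"
proof -
  assume "HRep F" "HRep G"
  then obtain hs1 where h1: "hok hs1" "\<And>V w H. cond V w \<Longrightarrow> eqon V (F H w) (hev H w hs1)"
    unfolding HRep_def by blast
  obtain hs2 where h2: "hok hs2" "\<And>V w H. cond V w \<Longrightarrow> eqon V (G H w) (hev H w hs2)"
    using \<open>HRep G\<close> unfolding HRep_def by blast
  have "hok (hs1 @ hs2)" using h1(1) h2(1) unfolding hok_def by auto
  moreover have "eqon V (\<lambda>q. F H w q + G H w q) (hev H w (hs1 @ hs2))" if "cond V w" for V w H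
    using h1(2)[OF that] h2(2)[OF that] unfolding eqon_def hev_def by auto
  ultimately show ?thesis unfolding HRep_def by blast
qed

lemma HRep_sum3: "(\<And>x. x \<in> {0,1,2} \<Longrightarrow> HRep (F x)) \<Longrightarrow> HRep (\<lambda>H w q. \<Sum>x\<in>{0::nat,1,2}. F x H w q)"
proof -
  assume h: "\<And>x. x \<in> {0,1,2} \<Longrightarrow> HRep (F x)"
  have "HRep (\<lambda>H w q. F 0 H w q + (F 1 H w q + F 2 H w q))"
    using h by (intro HRep_add) auto
  then show ?thesis by simp
qed

lemma HRep_eq: "HRep F \<Longrightarrow> (\<And>V w H. cond V w \<Longrightarrow> eqon V (G H w) (F H w)) \<Longrightarrow> HRep G"
  unfolding HRep_def using eqon_trans by blast

lemma HRep_atom: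
  assumes a: "a \<le> 2" and b: "b \<le> 2"
    and ws: "\<And>e Y g. (e,Y,g) \<in> set ws \<Longrightarrow> (\<lambda>q. k q * e q) \<in> Coef1 \<and> Yok Y \<and> g \<le> 2"
    and U: "\<And>V w. cond V w \<Longrightarrow> eqon V (U w) (gev w ws)"
  shows "HRep (\<lambda>H w q. H a b q * k q * U w q)"
proof -
  define hs :: "hterm list" where "hs = map (\<lambda>(e,Y,g). (\<lambda>q. k q * e q, a, b, Y, g)) ws"
  have "hok hs" unfolding hok_def hs_def using ws a b by auto
  moreover have "eqon V (\<lambda>q. H a b q * k q * U w q) (hev H w hs)" if "cond V w" for V w H
  proof -
    have "H a b q * k q * gev w ws q = hev H w hs q" for q
      unfolding gev_def hev_def hs_def by (induction ws) (auto simp: algebra_simps)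
    then show ?thesis using U[OF that] unfolding eqon_def by auto
  qed
  ultimately show ?thesis unfolding HRep_def by blast
qed

definition ub1l :: "nat \<Rightarrow> gterm list" where
  "ub1l b = (if b = 0 then [(\<lambda>q. 1, [], 0)] else [(\<lambda>q. crd b q / crd 0 q, [], 0), (\<lambda>q. 1, [], b)])"

lemma ub1: "ubpart b w = gev w (ub1l b)"
  by (rule ext) (simp add: ubpart_def gev_def ub1l_def)

lemma ub1l_ok: "b \<le> 2 \<Longrightarrow> (e,Y,g) \<in> set (ub1l b) \<Longrightarrow> e \<in> Coef \<and> Y = [] \<and> g \<le> 2"
  unfolding ub1l_def by (auto intro: Coef.cconst Coef.cy simp: le2_iff split: if_splits)

lemma ubpart_boost: "q \<in> Tpos \<Longrightarrow> a \<noteq> 0 \<Longrightarrow> ubpart a F q = sfun q * boost a F q"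
  unfolding ubpart_def boost_def sfun_def Tpos_def by (simp add: field_simps)

lemma Coef1_sfun: "sfun \<in> Coef1"
  using Coef1I[OF Coef.cconst[of 1], of sfun] by (simp add: eqon_def)

lemma ub2:
  assumes a: "a \<le> 2" and b: "b \<le> 2" and ab: "(a,b) \<noteq> (0,0)"
  shows "\<exists>ws. (\<forall>(e,Y,g)\<in>set ws. e \<in> Coef1 \<and> Yok Y \<and> g \<le> 2) \<and>
     (\<forall>V w. cond V w \<longrightarrow> eqon V (ubpart a (ubpart b w)) (gev w ws))"
proof (cases "a = 0")
  case False
  define ws :: "gterm list" where "ws = concat (map (\<lambda>(e,Y,g). [(\<lambda>q. sfun q * e q, [Lz a], g), (\<lambda>q. sfun q * boost a e q, [], g)]) (ub1l b))"
  have a12: "a \<in> {1,2}" using a False by auto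
  have AZa: "Lz a \<in> AZ" using a12 unfolding AZ_def by auto
  have "(\<forall>(e,Y,g)\<in>set ws. e \<in> Coef1 \<and> Yok Y \<and> g \<le> 2)"
  proof
    fix x assume "x \<in> set ws"
    then obtain y where y: "y \<in> set (ub1l b)" and x: "x \<in> set ((\<lambda>(e,Y,g). [(\<lambda>q. sfun q * e q, [Lz a], g), (\<lambda>q. sfun q * boost a e q, [], g)]) y)"
      unfolding ws_def by auto
    obtain e Y g where ye: "y = (e,Y,g)" by (cases y)
    have h: "e \<in> Coef" "g \<le> 2" using ub1l_ok[OF b] y ye by auto
    have be: "boost a e \<in> Coef" using Coef_zapp[OF h(1) AZa] by simp
    show "case x of (e,Y,g) \<Rightarrow> e \<in> Coef1 \<and> Yok Y \<and> g \<le> 2"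
      using x unfolding ye using Coef1_s[OF h(1)] Coef1_s[OF be] h(2) a12 by (auto simp: Yok_def)
  qed
  moreover have "eqon V (ubpart a (ubpart b w)) (gev w ws)" if c: "cond V w" for V w
    unfolding eqon_def
  proof
    fix q assume q: "q \<in> V"
    have V: "open V" using c cond_open by blast
    have qT: "q \<in> Tpos" using q cond_sub[OF c] by blast
    let ?T = "\<lambda>(e,B,d) q. e q * zapps B (dpart d w) q"
    have dT: "?T x differentiable (at q)" and eT: "fst x differentiable (at q)" and
      wT: "dpart (snd (snd x)) w differentiable (at q)" and sn: "fst (snd x) = []"
      if "x \<in> set (ub1l b)" for x
    proof -
      obtain e Y g where xe: "x = (e,Y,g)" by (cases x)
      have h: "e \<in> Coef" "Y = []" "g \<le> 2" using ub1l_ok[OF b] that xe by auto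
      have "e differentiable (at q)" using Coef_diff[OF h(1) qT] .
      moreover have "dpart g w differentiable (at q)" using sm_diff_at[OF V sm_dpart[OF cond_sm[OF c] h(3)] q] .
      ultimately show "?T x differentiable (at q)" "fst x differentiable (at q)" "dpart (snd (snd x)) w differentiable (at q)"
        "fst (snd x) = []"
        unfolding xe using h(2) diff_mult_at by auto
    qed
    have "ubpart a (ubpart b w) q = sfun q * boost a (ubpart b w) q" using ubpart_boost[OF qT False] .
    also have "boost a (ubpart b w) q = zapp (Lz a) (\<lambda>q. \<Sum>x\<leftarrow>ub1l b. ?T x q) q"
      unfolding ub1 gev_def by (simp add: case_prod_beta')
    also have "\<dots> = (\<Sum>x\<leftarrow>ub1l b. zapp (Lz a) (?T x) q)"
      using dT by (intro zapp_sum_list) auto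
    also have "\<dots> = (\<Sum>x\<leftarrow>ub1l b. fst x q * boost a (dpart (snd (snd x)) w) q + boost a (fst x) q * dpart (snd (snd x)) w q)"
    proof (rule sum_list_map_cong)
      fix x assume x: "x \<in> set (ub1l b)"
      obtain e Y g where xe: "x = (e,Y,g)" by (cases x)
      show "zapp (Lz a) (?T x) q = fst x q * boost a (dpart (snd (snd x)) w) q + boost a (fst x) q * dpart (snd (snd x)) w q"
        using zapp_mult[OF eT[OF x] wT[OF x], of "Lz a"] sn[OF x] unfolding xe by simp
    qed
    finally have "ubpart a (ubpart b w) q = sfun q * (\<Sum>x\<leftarrow>ub1l b. fst x q * boost a (dpart (snd (snd x)) w) q + boost a (fst x) q * dpart (snd (snd x)) w q)" .
    also have "\<dots> = gev w ws q"
      unfolding gev_def ws_def sum_list_concat_map sum_list_const_mult[symmetric]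
      by (rule sum_list_map_cong) (auto simp: algebra_simps)
    finally show "ubpart a (ubpart b w) q = gev w ws q" .
  qed
  ultimately show ?thesis by blast
next
  case True
  then have b12: "b \<in> {1,2}" using ab b by auto
  define ws :: "gterm list" where "ws = [(\<lambda>q. sfun q * ((\<lambda>q. -1) q * (\<lambda>q. crd b q / crd 0 q) q), [], 0), (sfun, [Lz b], 0)]"
  have "(\<forall>(e,Y,g)\<in>set ws. e \<in> Coef1 \<and> Yok Y \<and> g \<le> 2)"
  proof -
    have m1: "(\<lambda>q. sfun q * ((\<lambda>q. -1) q * (\<lambda>q. crd b q / crd 0 q) q)) \<in> Coef1"
      by (rule Coef1_s[OF Coef_mulI[OF Coef.cconst Coef.cy[OF b12]]])
    show ?thesis unfolding ws_def using m1 Coef1_sfun b12 by (simp add: Yok_def)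
  qed
  moreover have "eqon V (ubpart a (ubpart b w)) (gev w ws)" if c: "cond V w" for V w
    unfolding eqon_def
  proof
    fix q assume q: "q \<in> V"
    have V: "open V" using c cond_open by blast
    have qT: "q \<in> Tpos" using q cond_sub[OF c] by blast
    have b0: "b \<noteq> 0" using b12 by auto
    have sm: "smooth_on V w" using cond_sm[OF c] .
    have dy: "(\<lambda>q. crd b q / crd 0 q) differentiable (at q)" using Coef_diff[OF Coef.cy[OF b12] qT] .
    have d0: "dpart 0 w differentiable (at q)" using sm_diff_at[OF V sm_dpart[OF sm] q] by simp
    have db: "dpart b w differentiable (at q)" using sm_diff_at[OF V sm_dpart[OF sm b] q] .
    have "ubpart a (ubpart b w) q = dpart 0 (\<lambda>q. crd b q / crd 0 q * dpart 0 w q + dpart b w q) q"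
      unfolding True ubpart_def using b0 by simp
    also have "\<dots> = dpart 0 (\<lambda>q. crd b q / crd 0 q * dpart 0 w q) q + dpart 0 (dpart b w) q"
      by (rule dpart_add[OF diff_mult_at[OF dy d0] db])
    also have "dpart 0 (\<lambda>q. crd b q / crd 0 q * dpart 0 w q) q
       = crd b q / crd 0 q * dpart 0 (dpart 0 w) q + dpart 0 (\<lambda>q. crd b q / crd 0 q) q * dpart 0 w q"
      by (rule dpart_mult[OF dy d0])
    also have "dpart 0 (\<lambda>q. crd b q / crd 0 q) q = sfun q * (- (crd b q / crd 0 q))"
      using dpart_y[OF qT _ b12, of 0] b0 by simp
    also have "dpart 0 (dpart b w) q = dpart b (dpart 0 w) q"
      using schwarz[OF V sm b _ q, of 0] by simp
    finally show "ubpart a (ubpart b w) q = gev w ws q"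
      unfolding gev_def ws_def using qT unfolding sfun_def Tpos_def by (simp add: field_simps boost_def)
  qed
  ultimately show ?thesis by blast
qed

lemma Psi_Coef: "a \<le> 2 \<Longrightarrow> b \<le> 2 \<Longrightarrow> Psi a b \<in> Coef"
proof -
  assume a: "a \<le> 2" and b: "b \<le> 2"
  show ?thesis
  proof (cases "a \<noteq> 0 \<and> b = 0")
    case True
    then have a12: "a \<in> {1,2}" using a by auto
    have e: "Psi a b = (\<lambda>q. (\<lambda>q. -1) q * (\<lambda>q. crd a q / crd 0 q) q)"
      using True by (auto simp: Psi_def fun_eq_iff)
    show ?thesis unfolding e by (rule Coef_mulI[OF Coef.cconst Coef.cy[OF a12]])
  next
    case False
    then have "Psi a b = (\<lambda>q. if a = 0 then (if b = 0 then 1 else 0) else (if a = b then 1 else 0))"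
      by (auto simp: Psi_def fun_eq_iff)
    then show ?thesis using Coef.cconst by simp
  qed
qed

lemma HopNF: "HRep (\<lambda>H w. Hop H w)"
proof -
  have T1: "HRep (\<lambda>H w q. if (a, b) = (0, 0) then 0 else Hbar H a b q * ubpart a (ubpart b w) q)"
    if a: "a \<in> {0,1,2}" and b: "b \<in> {0,1,2}" for a b
  proof (cases "(a,b) = (0,0)")
    case True
    then show ?thesis using HRep_zero by simp
  next
    case False
    have a2: "a \<le> 2" and b2: "b \<le> 2" using a b by auto
    obtain ws where ws: "\<forall>(e,Y,g)\<in>set ws. e \<in> Coef1 \<and> Yok Y \<and> g \<le> 2"
      and U: "\<And>V w. cond V w \<Longrightarrow> eqon V (ubpart a (ubpart b w)) (gev w ws)"
      using ub2[OF a2 b2 False] by blast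
    have "HRep (\<lambda>H w q. \<Sum>a'\<in>{0::nat,1,2}. \<Sum>b'\<in>{0::nat,1,2}. H a' b' q * (\<lambda>q. Psi a' a q * Psi b' b q) q * ubpart a (ubpart b w) q)"
    proof (intro HRep_sum3)
      fix a' b' :: nat assume a': "a' \<in> {0,1,2}" and b': "b' \<in> {0,1,2}"
      have k: "(\<lambda>q. Psi a' a q * Psi b' b q) \<in> Coef"
        using Psi_Coef[OF _ a2, of a'] Psi_Coef[OF _ b2, of b'] a' b' by (intro Coef_mulI) auto
      show "HRep (\<lambda>H w q. H a' b' q * (\<lambda>q. Psi a' a q * Psi b' b q) q * ubpart a (ubpart b w) q)"
        using a' b' Coef1_mul2[OF k] ws U
        by (intro HRep_atom[where ws=ws and U="\<lambda>w. ubpart a (ubpart b w)"]) auto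
    qed
    then show ?thesis
    proof (rule HRep_eq)
      fix V w H
      show "eqon V (\<lambda>q. if (a, b) = (0, 0) then 0 else Hbar H a b q * ubpart a (ubpart b w) q)
        (\<lambda>q. \<Sum>a'\<in>{0::nat,1,2}. \<Sum>b'\<in>{0::nat,1,2}. H a' b' q * (\<lambda>q. Psi a' a q * Psi b' b q) q * ubpart a (ubpart b w) q)"
        unfolding eqon_def
      proof
        fix q
        have "(if (a, b) = (0, 0) then 0 else Hbar H a b q * ubpart a (ubpart b w) q) = Hbar H a b q * ubpart a (ubpart b w) q"
          by (rule if_not_P[OF False])
        also have "\<dots> = (\<Sum>a'\<in>{0::nat,1,2}. \<Sum>b'\<in>{0::nat,1,2}. H a' b' q * (\<lambda>q. Psi a' a q * Psi b' b q) q * ubpart a (ubpart b w) q)"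
          unfolding Hbar_def sum_distrib_right by (simp only: mult.assoc)
        finally show "(if (a, b) = (0, 0) then 0 else Hbar H a b q * ubpart a (ubpart b w) q) = (\<Sum>a'\<in>{0::nat,1,2}. \<Sum>b'\<in>{0::nat,1,2}. H a' b' q * (\<lambda>q. Psi a' a q * Psi b' b q) q * ubpart a (ubpart b w) q)" .
      qed
    qed
  qed
  have T2: "HRep (\<lambda>H w q. H a b q * dpart a (Psi b b') q * ubpart b' w q)"
    if a: "a \<in> {0,1,2}" and b: "b \<in> {0,1,2}" and b': "b' \<in> {0,1,2}" for a b b'
  proof -
    have a2: "a \<le> 2" and b2: "b \<le> 2" and b'2: "b' \<le> 2" using a b b' by auto
    obtain g where g: "g \<in> Coef" "eqon Tpos (dpart a (Psi b b')) (\<lambda>q. sfun q * g q)"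
      using Coef_dpart[OF Psi_Coef[OF b2 b'2] a2] by blast
    have k: "dpart a (Psi b b') \<in> Coef1" using Coef1I[OF g] .
    show ?thesis
    proof (rule HRep_atom[OF a2 b2, where ws="ub1l b'"])
      fix e Y g assume "(e,Y,g) \<in> set (ub1l b')"
      then show "(\<lambda>q. dpart a (Psi b b') q * e q) \<in> Coef1 \<and> Yok Y \<and> g \<le> 2"
        using ub1l_ok[OF b'2] Coef1_mul[OF k] by (auto simp: Yok_def)
    next
      fix V w show "eqon V (ubpart b' w) (gev w (ub1l b'))" using ub1 eqon_refl by simp
    qed
  qed
  have S1: "HRep (\<lambda>H w q. \<Sum>a\<in>{0::nat,1,2}. \<Sum>b\<in>{0::nat,1,2}. if (a, b) = (0, 0) then 0 else Hbar H a b q * ubpart a (ubpart b w) q)"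
    using T1 by (intro HRep_sum3) auto
  have S2: "HRep (\<lambda>H w q. \<Sum>a\<in>{0::nat,1,2}. \<Sum>b\<in>{0::nat,1,2}. \<Sum>b'\<in>{0::nat,1,2}. H a b q * dpart a (Psi b b') q * ubpart b' w q)"
    using T2 by (intro HRep_sum3) auto
  have "HRep (\<lambda>H w q. (\<Sum>a\<in>{0::nat,1,2}. \<Sum>b\<in>{0::nat,1,2}. if (a, b) = (0, 0) then 0 else Hbar H a b q * ubpart a (ubpart b w) q)
     + (\<Sum>a\<in>{0::nat,1,2}. \<Sum>b\<in>{0::nat,1,2}. \<Sum>b'\<in>{0::nat,1,2}. H a b q * dpart a (Psi b b') q * ubpart b' w q))"
    by (rule HRep_add[OF S1 S2])
  then show ?thesis unfolding Hop_def[abs_def] .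
qed



lemma zapp_diff:
  assumes "f differentiable (at q)" "g differentiable (at q)"
  shows "zapp Z (\<lambda>x. f x - g x) q = zapp Z f q - zapp Z g q"
  by (cases Z) (auto simp: dpart_diff[OF assms] boost_def algebra_simps)

lemma cond_zapps: "cond V u \<Longrightarrow> set K \<subseteq> AZ \<Longrightarrow> cond V (zapps K u)"
  unfolding cond_def using sm_zapps by blast

lemma GY: "Yok Y \<Longrightarrow> g \<le> 2 \<Longrightarrow> set K \<subseteq> AZ \<Longrightarrow> GRep (Suc (length K)) (Suc (Lc K)) (\<lambda>u. zapps Y (dpart g (zapps K u)))"
proof -
  assume Y: "Yok Y" and g: "g \<le> 2" and K: "set K \<subseteq> AZ"
  note G = G4[OF K g]
  show ?thesis
  proof (cases "Y = []")
    case True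
    then show ?thesis using GRep_mono[OF G] by simp
  next
    case False
    then obtain c where c: "c \<in> {1,2}" and Yc: "Y = [Lz c]" using Y unfolding Yok_def by auto
    have "Lz c \<in> AZ" using c unfolding AZ_def by auto
    from GRep_zapp[OF G this] show ?thesis using Yc by simp
  qed
qed

lemma BR:
  assumes K: "set K \<subseteq> AZ" and Z: "Z \<in> AZ" and Y: "Yok Y" and g: "g \<le> 2"
  shows "GRep (Suc (length K)) (Suc (Lc K))
     (\<lambda>u q. zapp Z (zapps Y (dpart g (zapps K u))) q - zapps Y (dpart g (zapp Z (zapps K u))) q)"
proof -
  note G = G4[OF K]
  have GL: "GRep (Suc (length K)) (Suc (Lc K)) (\<lambda>u. boost c (dpart d (zapps K u)))" if "c \<in> {1,2}" "d \<le> 2" for c d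
  proof -
    have "Lz c \<in> AZ" using that unfolding AZ_def by auto
    from GRep_zapp[OF G[OF that(2)] this] show ?thesis by simp
  qed
  have GD: "GRep (Suc (length K)) (Suc (Lc K)) (\<lambda>u. dpart a (dpart d (zapps K u)))" if "a \<le> 2" "d \<le> 2" for a d
  proof -
    have "Dz a \<in> AZ" using that le2_iff unfolding AZ_def by auto
    from GRep_zapp[OF G[OF that(2)] this] show ?thesis using GRep_mono by fastforce
  qed
  have GG: "GRep (Suc (length K)) (Suc (Lc K)) (\<lambda>u. dpart d (zapps K u))" if "d \<le> 2" for d
    using GRep_mono[OF G[OF that]] by simp
  have Gif: "GRep p k (\<lambda>u q. if P then F u q else 0)" if "P \<Longrightarrow> GRep p k F" for P p k F
    using that GRep_zero by (cases P) auto
  show ?thesis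
  proof (cases "Y = []")
    case Y0: True
    show ?thesis
    proof (rule AZ_cases[OF Z])
      fix a assume Za: "Z = Dz a" and a: "a \<le> 2"
      show ?thesis
      proof (rule GRep_eq[OF GRep_zero])
        fix V u assume c: "cond V u"
        have sm: "smooth_on V (zapps K u)" using cond_sm[OF cond_zapps[OF c K]] .
        show "eqon V (\<lambda>q. zapp Z (zapps Y (dpart g (zapps K u))) q - zapps Y (dpart g (zapp Z (zapps K u))) q) (\<lambda>q. 0)"
          unfolding eqon_def Za Y0 using schwarz[OF cond_open[OF c] sm a g] by simp
      qed
    next
      fix b assume Zb: "Z = Lz b" and b: "b \<in> {1,2}"
      have b2: "b \<le> 2" using b by auto
      have R: "GRep (Suc (length K)) (Suc (Lc K)) (\<lambda>u q. - ((if g = b then dpart 0 (zapps K u) q else 0) + (if g = 0 then dpart b (zapps K u) q else 0)))"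
        by (intro GRep_neg GRep_add Gif GG) (use b2 in auto)
      show ?thesis
      proof (rule GRep_eq[OF R])
        fix V u assume c: "cond V u"
        have sm: "smooth_on V (zapps K u)" using cond_sm[OF cond_zapps[OF c K]] .
        show "eqon V (\<lambda>q. zapp Z (zapps Y (dpart g (zapps K u))) q - zapps Y (dpart g (zapp Z (zapps K u))) q)
          (\<lambda>q. - ((if g = b then dpart 0 (zapps K u) q else 0) + (if g = 0 then dpart b (zapps K u) q else 0)))"
          unfolding eqon_def Zb Y0 using comm_dL[OF cond_open[OF c] sm _ g b2] by simp
      qed
    qed
  next
    case False
    then obtain c where c: "c \<in> {1,2}" and Yc: "Y = [Lz c]" using Y unfolding Yok_def by auto
    have c2: "c \<le> 2" using c by auto
    show ?thesis
    proof (rule AZ_cases[OF Z])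
      fix a assume Za: "Z = Dz a" and a: "a \<le> 2"
      have R: "GRep (Suc (length K)) (Suc (Lc K)) (\<lambda>u q. (if a = c then dpart 0 (dpart g (zapps K u)) q else 0) + (if a = 0 then dpart c (dpart g (zapps K u)) q else 0))"
        by (intro GRep_add Gif GD) (use c2 g in auto)
      show ?thesis
      proof (rule GRep_eq[OF R])
        fix V u assume cu: "cond V u"
        have V: "open V" using cond_open[OF cu] .
        have sm: "smooth_on V (zapps K u)" using cond_sm[OF cond_zapps[OF cu K]] .
        have smv: "smooth_on V (dpart g (zapps K u))" using sm_dpart[OF sm g] .
        show "eqon V (\<lambda>q. zapp Z (zapps Y (dpart g (zapps K u))) q - zapps Y (dpart g (zapp Z (zapps K u))) q)
          (\<lambda>q. (if a = c then dpart 0 (dpart g (zapps K u)) q else 0) + (if a = 0 then dpart c (dpart g (zapps K u)) q else 0))"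
          unfolding eqon_def
        proof
          fix q assume q: "q \<in> V"
          have "boost c (dpart g (dpart a (zapps K u))) q = boost c (dpart a (dpart g (zapps K u))) q"
            by (rule boost_local[OF V q]) (use schwarz[OF V sm a g] in auto)
          then show "zapp Z (zapps Y (dpart g (zapps K u))) q - zapps Y (dpart g (zapp Z (zapps K u))) q =
            (if a = c then dpart 0 (dpart g (zapps K u)) q else 0) + (if a = 0 then dpart c (dpart g (zapps K u)) q else 0)"
            unfolding Za Yc using comm_dL[OF V smv q a c2] by simp
        qed
      qed
    next
      fix b assume Zb: "Z = Lz b" and b: "b \<in> {1,2}"
      have b2: "b \<le> 2" using b by auto
      have R: "GRep (Suc (length K)) (Suc (Lc K)) (\<lambda>u q. ((\<lambda>q. crd b q / crd 0 q) q * boost c (dpart g (zapps K u)) q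
          - (\<lambda>q. crd c q / crd 0 q) q * boost b (dpart g (zapps K u)) q)
          - ((if g = b then boost c (dpart 0 (zapps K u)) q else 0) + (if g = 0 then boost c (dpart b (zapps K u)) q else 0)))"
        by (intro GRep_diff GRep_add Gif GRep_scale GL Coef.cy) (use b c g in auto)
      show ?thesis
      proof (rule GRep_eq[OF R])
        fix V u assume cu: "cond V u"
        have V: "open V" using cond_open[OF cu] .
        let ?w = "zapps K u"
        have sm: "smooth_on V ?w" using cond_sm[OF cond_zapps[OF cu K]] .
        have smv: "smooth_on V (dpart g ?w)" using sm_dpart[OF sm g] .
        show "eqon V (\<lambda>q. zapp Z (zapps Y (dpart g (zapps K u))) q - zapps Y (dpart g (zapp Z (zapps K u))) q)
          (\<lambda>q. ((\<lambda>q. crd b q / crd 0 q) q * boost c (dpart g (zapps K u)) q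
          - (\<lambda>q. crd c q / crd 0 q) q * boost b (dpart g (zapps K u)) q)
          - ((if g = b then boost c (dpart 0 (zapps K u)) q else 0) + (if g = 0 then boost c (dpart b (zapps K u)) q else 0)))"
          unfolding eqon_def
        proof
          fix q assume q: "q \<in> V"
          have qT: "crd 0 q \<noteq> 0" using q cond_sub[OF cu] unfolding Tpos_def by auto
          define E where "E = (\<lambda>q. boost b (dpart g ?w) q + (if g = b then dpart 0 ?w q else 0) + (if g = 0 then dpart b ?w q else 0))"
          have e1: "boost c (dpart g (boost b ?w)) q = boost c E q"
            by (rule boost_local[OF V q]) (use comm_dL[OF V sm _ g b2] in \<open>auto simp: E_def\<close>)
          have d1: "boost b (dpart g ?w) differentiable (at q)" using sm_diff_at[OF V sm_boost[OF V smv b2] q] .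
          have d2: "dpart 0 ?w differentiable (at q)" using sm_diff_at[OF V sm_dpart[OF sm, of 0] q] by simp
          have d3: "dpart b ?w differentiable (at q)" using sm_diff_at[OF V sm_dpart[OF sm b2] q] .
          have e2: "boost c E q = boost c (boost b (dpart g ?w)) q + (if g = b then boost c (dpart 0 ?w) q else 0)
              + (if g = 0 then boost c (dpart b ?w) q else 0)"
          proof (cases "g = b")
            case True
            then have g0: "g \<noteq> 0" using b by auto
            have "E = (\<lambda>q. boost b (dpart g ?w) q + dpart 0 ?w q)" unfolding E_def using True g0 by simp
            then show ?thesis using boost_add[OF d1 d2] True g0 by simp
          next
            case gb: False
            show ?thesis
            proof (cases "g = 0")
              case True
              have "E = (\<lambda>q. boost b (dpart g ?w) q + dpart b ?w q)" unfolding E_def using True gb by simp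
              then show ?thesis using boost_add[OF d1 d3] True gb by simp
            next
              case False
              have "E = boost b (dpart g ?w)" unfolding E_def using False gb by simp
              then show ?thesis using False gb by simp
            qed
          qed
          have LL: "boost b (boost c (dpart g ?w)) q - boost c (boost b (dpart g ?w)) q
             = crd b q / crd 0 q * boost c (dpart g ?w) q - crd c q / crd 0 q * boost b (dpart g ?w) q"
            using comm_LL[OF V smv q c b] rot_boost[OF qT] by simp
          show "zapp Z (zapps Y (dpart g (zapps K u))) q - zapps Y (dpart g (zapp Z (zapps K u))) q =
            ((\<lambda>q. crd b q / crd 0 q) q * boost c (dpart g (zapps K u)) q
            - (\<lambda>q. crd c q / crd 0 q) q * boost b (dpart g (zapps K u)) q)
            - ((if g = b then boost c (dpart 0 (zapps K u)) q else 0) + (if g = 0 then boost c (dpart b (zapps K u)) q else 0))"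
            unfolding Zb Yc using e1 e2 LL by simp
        qed
      qed
    qed
  qed
qed



lemma Yok_AZ: "Yok Y \<Longrightarrow> set Y \<subseteq> AZ" unfolding Yok_def AZ_def by auto

lemma condH_cond: "condH V u H \<Longrightarrow> cond V u" unfolding condH_def by blast

lemma condH_zapps: "condH V u H \<Longrightarrow> set K \<subseteq> AZ \<Longrightarrow> condH V (zapps K u) H"
  unfolding condH_def using cond_zapps by blast

lemma hterm_parts:
  assumes c: "condH V w H" and cc: "c \<in> Coef1" and a: "a \<le> 2" and b: "b \<le> 2" and g: "g \<le> 2"
    and Y: "Yok Y" and q: "q \<in> V"
  shows "c differentiable (at q)" "H a b differentiable (at q)" "zapps Y (dpart g w) differentiable (at q)"
    "smooth_on V (\<lambda>q. c q * H a b q * zapps Y (dpart g w) q)"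
proof -
  note fp = fterm_parts[OF c cc a b g _ Yok_AZ[OF Y] q, of "[]"]
  have V: "open V" using c unfolding condH_def cond_def by blast
  show "c differentiable (at q)" "zapps Y (dpart g w) differentiable (at q)" using fp by auto
  show "H a b differentiable (at q)" using fp by simp
  show "smooth_on V (\<lambda>q. c q * H a b q * zapps Y (dpart g w) q)"
    using fp by (intro sm_mult[OF V] ) auto
qed

lemma hev_smooth:
  assumes c: "condH V w H" and h: "hok hs"
  shows "smooth_on V (hev H w hs)"
proof -
  have V: "open V" using c unfolding condH_def cond_def by blast
  have "smooth_on V (\<lambda>q. \<Sum>x\<leftarrow>hs. (\<lambda>(c,a,b,Y,g) q. c q * H a b q * zapps Y (dpart g w) q) x q)"
  proof (rule sm_sum_list[OF V], rule ballI)
    fix x assume x: "x \<in> set hs"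
    obtain cc a b Y g where xe: "x = (cc,a,b,Y,g)" by (cases x)
    have hh: "cc \<in> Coef1" "a \<le> 2" "b \<le> 2" "g \<le> 2" "Yok Y" using h x unfolding hok_def xe by auto
    show "smooth_on V ((\<lambda>(c,a,b,Y,g) q. c q * H a b q * zapps Y (dpart g w) q) x)"
    proof (cases "V = {}")
      case True then show ?thesis unfolding smooth_on_def differentiable_on_def by simp
    next
      case False
      then obtain q where "q \<in> V" by blast
      then show ?thesis unfolding xe using hterm_parts(4)[OF c hh] by simp
    qed
  qed
  then show ?thesis unfolding hev_def by (simp add: case_prod_beta')
qed

lemma HopNF': obtains hs where "hok hs" "\<And>V w H. cond V w \<Longrightarrow> eqon V (Hop H w) (hev H w hs)"
  using HopNF unfolding HRep_def by blast

lemma Hop_smooth: "condH V w H \<Longrightarrow> smooth_on V (Hop H w)"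
proof -
  assume c: "condH V w H"
  obtain hs where hs: "hok hs" "\<And>V w H. cond V w \<Longrightarrow> eqon V (Hop H w) (hev H w hs)" using HopNF unfolding HRep_def by blast
  have V: "open V" using c unfolding condH_def cond_def by blast
  show ?thesis using sm_eqon[OF V hev_smooth[OF c hs(1)] eqon_sym[OF hs(2)[OF condH_cond[OF c]]]] .
qed

lemma sum_list_diff: "(\<Sum>x\<leftarrow>xs. (f x::real) - g x) = (\<Sum>x\<leftarrow>xs. f x) - (\<Sum>x\<leftarrow>xs. g x)"
  by (induction xs) auto

lemma CommStep:
  assumes K: "set K \<subseteq> AZ" and Z: "Z \<in> AZ"
  shows "FRep (Suc (length K)) ((if is_Lz Z then 1 else 0) + Lc K)
    (\<lambda>u H q. zapp Z (Hop H (zapps K u)) q - Hop H (zapp Z (zapps K u)) q)"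
proof -
  obtain hs where hs: "hok hs" "\<And>V w H. cond V w \<Longrightarrow> eqon V (Hop H w) (hev H w hs)" using HopNF unfolding HRep_def by blast
  define p where "p = Suc (length K)"
  define k where "k = (if is_Lz Z then 1 else 0) + Lc K"
  define Dt :: "hterm \<Rightarrow> fn \<Rightarrow> (nat \<Rightarrow> nat \<Rightarrow> fn) \<Rightarrow> fn" where
    "Dt = (\<lambda>(c,a,b,Y,g) u H q. zapp Z c q * zapps [] (H a b) q * zapps Y (dpart g (zapps K u)) q
       + c q * zapps [Z] (H a b) q * zapps Y (dpart g (zapps K u)) q
       + c q * zapps [] (H a b) q * (zapp Z (zapps Y (dpart g (zapps K u))) q - zapps Y (dpart g (zapp Z (zapps K u))) q))"
  have FD: "FRep p k (Dt j)" if j: "j \<in> set hs" for j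
  proof -
    obtain c a b Y g where je: "j = (c,a,b,Y,g)" by (cases j)
    have hh: "c \<in> Coef1" "a \<le> 2" "b \<le> 2" "g \<le> 2" "Yok Y" using hs(1) j unfolding hok_def je by auto
    note GYg = GY[OF hh(5) hh(4) K]
    have ZKm: "B \<in> ZK (Suc (length K)) (Suc k)" if "B \<in> ZK (Suc (length K)) (Suc (Lc K))" for B
      using ZK_mono[OF that] unfolding k_def by simp
    have F1: "FRep p k (\<lambda>u H q. zapp Z c q * zapps [] (H a b) q * zapps Y (dpart g (zapps K u)) q)"
      unfolding p_def
      by (rule G_to_F[OF Coef1_zapp[OF hh(1) Z] hh(2,3) GYg]) (rule adm_nil[OF ZKm])
    have F2: "FRep p k (\<lambda>u H q. c q * zapps [Z] (H a b) q * zapps Y (dpart g (zapps K u)) q)"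
      unfolding p_def k_def
      by (rule G_to_F[OF hh(1) hh(2,3) GYg]) (rule adm_one[OF Z])
    have F3: "FRep p k (\<lambda>u H q. c q * zapps [] (H a b) q * (zapp Z (zapps Y (dpart g (zapps K u))) q - zapps Y (dpart g (zapp Z (zapps K u))) q))"
      unfolding p_def
      by (rule G_to_F[OF hh(1) hh(2,3) BR[OF K Z hh(5) hh(4)]]) (rule adm_nil[OF ZKm])
    show ?thesis unfolding je Dt_def using FRep_add[OF FRep_add[OF F1 F2] F3] by simp
  qed
  have FS: "FRep p k (\<lambda>u H q. \<Sum>j\<leftarrow>hs. Dt j u H q)" using FRep_sum_list[of hs p k Dt] FD by blast
  show ?thesis unfolding p_def[symmetric] k_def[symmetric]
  proof (rule FRep_eq[OF FS])
    fix V u H assume cH: "condH V u H"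
    let ?w = "zapps K u"
    have cw: "condH V ?w H" using condH_zapps[OF cH K] .
    have cZw: "condH V (zapp Z ?w) H" using condH_zapps[OF cH, of "Z # K"] K Z by simp
    have V: "open V" using cH unfolding condH_def cond_def by blast
    let ?T = "\<lambda>w. \<lambda>(c,a,b,Y,g) q. c q * H a b q * zapps Y (dpart g w) q"
    show "eqon V (\<lambda>q. zapp Z (Hop H ?w) q - Hop H (zapp Z ?w) q) (\<lambda>q. \<Sum>j\<leftarrow>hs. Dt j u H q)"
      unfolding eqon_def
    proof
      fix q assume q: "q \<in> V"
      have hok_el: "c \<in> Coef1 \<and> a \<le> 2 \<and> b \<le> 2 \<and> g \<le> 2 \<and> Yok Y" if "(c,a,b,Y,g) \<in> set hs" for c a b Y g
        using hs(1) that unfolding hok_def by fastforce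
      have "zapp Z (Hop H ?w) q = zapp Z (hev H ?w hs) q"
        by (rule zapp_local[OF V q]) (use hs(2)[OF condH_cond[OF cw]] in \<open>simp add: eqon_def\<close>)
      also have "\<dots> = zapp Z (\<lambda>q. \<Sum>x\<leftarrow>hs. ?T ?w x q) q"
        unfolding hev_def by (simp add: case_prod_beta')
      also have "\<dots> = (\<Sum>x\<leftarrow>hs. zapp Z (?T ?w x) q)"
      proof (rule zapp_sum_list, rule ballI)
        fix x assume x: "x \<in> set hs"
        obtain c a b Y g where xe: "x = (c,a,b,Y,g)" by (cases x)
        have hh: "c \<in> Coef1" "a \<le> 2" "b \<le> 2" "g \<le> 2" "Yok Y" using hok_el x xe by auto
        note tp = hterm_parts[OF cw hh q]
        show "?T ?w x differentiable (at q)" unfolding xe using diff_mult_at[OF diff_mult_at[OF tp(1,2)] tp(3)] by simp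
      qed
      finally have e1: "zapp Z (Hop H ?w) q = (\<Sum>x\<leftarrow>hs. zapp Z (?T ?w x) q)" .
      have e2: "Hop H (zapp Z ?w) q = (\<Sum>x\<leftarrow>hs. ?T (zapp Z ?w) x q)"
        using hs(2)[OF condH_cond[OF cZw]] q unfolding eqon_def hev_def by (simp add: case_prod_beta')
      have "zapp Z (Hop H ?w) q - Hop H (zapp Z ?w) q = (\<Sum>x\<leftarrow>hs. zapp Z (?T ?w x) q - ?T (zapp Z ?w) x q)"
        unfolding e1 e2 sum_list_diff ..
      also have "\<dots> = (\<Sum>j\<leftarrow>hs. Dt j u H q)"
      proof (rule sum_list_map_cong)
        fix x assume x: "x \<in> set hs"
        obtain c a b Y g where xe: "x = (c,a,b,Y,g)" by (cases x)
        have hh: "c \<in> Coef1" "a \<le> 2" "b \<le> 2" "g \<le> 2" "Yok Y" using hok_el x xe by auto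
        note tp = hterm_parts[OF cw hh q]
        show "zapp Z (?T ?w x) q - ?T (zapp Z ?w) x q = Dt x u H q"
          unfolding xe Dt_def using zapp_mult3[OF tp(1-3), of Z] by (simp add: algebra_simps)
      qed
      finally show "zapp Z (Hop H ?w) q - Hop H (zapp Z ?w) q = (\<Sum>j\<leftarrow>hs. Dt j u H q)" .
    qed
  qed
qed

lemma MainRep: "set K \<subseteq> AZ \<Longrightarrow> FRep (length K) (Lc K) (\<lambda>u H q. zapps K (Hop H u) q - Hop H (zapps K u) q)"
proof (induction K)
  case Nil
  show ?case by (rule FRep_eq[OF FRep_zero]) (simp add: eqon_def)
next
  case (Cons Z K)
  have Z: "Z \<in> AZ" and K: "set K \<subseteq> AZ" using Cons.prems by auto
  have F: "FRep (Suc (length K)) ((if is_Lz Z then 1 else 0) + Lc K)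
     (\<lambda>u H q. zapp Z (\<lambda>q. zapps K (Hop H u) q - Hop H (zapps K u) q) q
        + (zapp Z (Hop H (zapps K u)) q - Hop H (zapp Z (zapps K u)) q))"
    using FRep_add[OF FRep_zapp[OF Cons.IH[OF K] Z] CommStep[OF K Z]] by simp
  show ?case
  proof (rule FRep_eq)
    show "FRep (length (Z # K)) (Lc (Z # K)) (\<lambda>u H q. zapp Z (\<lambda>q. zapps K (Hop H u) q - Hop H (zapps K u) q) q
        + (zapp Z (Hop H (zapps K u)) q - Hop H (zapp Z (zapps K u)) q))" using F by simp
  next
    fix V u H assume cH: "condH V u H"
    have V: "open V" using cH unfolding condH_def cond_def by blast
    have s1: "smooth_on V (zapps K (Hop H u))" using sm_zapps[OF V Hop_smooth[OF cH] K] .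
    have s2: "smooth_on V (Hop H (zapps K u))" using Hop_smooth[OF condH_zapps[OF cH K]] .
    show "eqon V (\<lambda>q. zapps (Z # K) (Hop H u) q - Hop H (zapps (Z # K) u) q)
       (\<lambda>q. zapp Z (\<lambda>q. zapps K (Hop H u) q - Hop H (zapps K u) q) q
        + (zapp Z (Hop H (zapps K u)) q - Hop H (zapp Z (zapps K u)) q))"
      unfolding eqon_def
    proof
      fix q assume q: "q \<in> V"
      show "zapps (Z # K) (Hop H u) q - Hop H (zapps (Z # K) u) q =
        zapp Z (\<lambda>q. zapps K (Hop H u) q - Hop H (zapps K u) q) q
        + (zapp Z (Hop H (zapps K u)) q - Hop H (zapp Z (zapps K u)) q)"
        using zapp_diff[OF sm_diff_at[OF V s1 q] sm_diff_at[OF V s2 q], of Z] by simp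
    qed
  qed
qed



lemma finite_ZK: "finite (ZK p k)"
proof -
  have "ZK p k \<subseteq> {xs. set xs \<subseteq> AZ \<and> length xs \<le> p}" by (auto simp: ZK_iff)
  moreover have "finite {xs. set xs \<subseteq> AZ \<and> length xs \<le> p}"
    by (rule finite_lists_length_le) (simp add: AZ_def)
  ultimately show ?thesis by (rule finite_subset)
qed

lemma Nil_ZK: "[] \<in> ZK p k" unfolding ZK_iff by simp

lemma znorm_ge: "zs \<in> ZK p k \<Longrightarrow> \<bar>zapps zs w q\<bar> \<le> znorm p k w q"
  unfolding znorm_def by (rule Max_ge) (use finite_ZK in auto)

lemma znorm_nonneg: "0 \<le> znorm p k w q"
  using znorm_ge[of "[]" p k w q] Nil_ZK[of p k] by linarith

lemma dnorm_ge: "g \<le> 2 \<Longrightarrow> znorm p k (dpart g u) q \<le> dnorm p k u q"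
  unfolding dnorm_def by (rule Max_ge) (auto simp: le2_iff)

lemma dnorm_nonneg: "0 \<le> dnorm p k u q"
  using dnorm_ge[of 0 p k u q] znorm_nonneg[of p k "dpart 0 u" q] by linarith

lemma Hnorm_ge: "a \<le> 2 \<Longrightarrow> b \<le> 2 \<Longrightarrow> znorm p k (H a b) q \<le> Hnorm p k H q"
  unfolding Hnorm_def by (rule Max_ge) (auto simp: le2_iff)

lemma Hnorm_nonneg: "0 \<le> Hnorm p k H q"
  using Hnorm_ge[of 0 0 p k H q] znorm_nonneg[of p k "H 0 0" q] by linarith

lemma Habs_nonneg: "0 \<le> Habs H q"
proof -
  have "\<bar>H 0 0 q\<bar> \<le> Habs H q" unfolding Habs_def by (rule Max_ge) auto
  then show ?thesis by linarith
qed

definition Ssum :: "nat \<Rightarrow> nat \<Rightarrow> fn \<Rightarrow> (nat \<Rightarrow> nat \<Rightarrow> fn) \<Rightarrow> pt \<Rightarrow> real" where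
  "Ssum p k u H q = (\<Sum>p1<p. \<Sum>k1\<le>k. dnorm (p1 + 1) (k1 + 1) u q * Hnorm (p - p1) (k - k1) H q)"

lemma Ssum_nonneg: "0 \<le> Ssum p k u H q"
  unfolding Ssum_def by (intro sum_nonneg mult_nonneg_nonneg dnorm_nonneg Hnorm_nonneg)

lemma Ssum_ge: "p1 < p \<Longrightarrow> k1 \<le> k \<Longrightarrow> dnorm (p1 + 1) (k1 + 1) u q * Hnorm (p - p1) (k - k1) H q \<le> Ssum p k u H q"
proof -
  assume h: "p1 < p" "k1 \<le> k"
  have "dnorm (p1 + 1) (k1 + 1) u q * Hnorm (p - p1) (k - k1) H q
     \<le> (\<Sum>k1\<in>{..k}. dnorm (p1 + 1) (k1 + 1) u q * Hnorm (p - p1) (k - k1) H q)"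
    by (rule member_le_sum[where f="\<lambda>k1. dnorm (p1 + 1) (k1 + 1) u q * Hnorm (p - p1) (k - k1) H q"])
       (use h in \<open>auto intro: mult_nonneg_nonneg dnorm_nonneg Hnorm_nonneg\<close>)
  also have "\<dots> \<le> Ssum p k u H q" unfolding Ssum_def
    by (rule member_le_sum[where f="\<lambda>p1. \<Sum>k1\<le>k. dnorm (p1 + 1) (k1 + 1) u q * Hnorm (p - p1) (k - k1) H q"])
       (use h in \<open>auto intro: sum_nonneg mult_nonneg_nonneg dnorm_nonneg Hnorm_nonneg\<close>)
  finally show ?thesis .
qed

lemma term_bound:
  assumes "adm p k A B" "a \<le> 2" "b \<le> 2" "g \<le> 2"
  shows "\<bar>zapps A (H a b) q\<bar> * \<bar>zapps B (dpart g u) q\<bar> \<le> Ssum p k u H q"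
proof -
  obtain p1 k1 where h: "p1 < p" "k1 \<le> k" "A \<in> ZK (p - p1) (k - k1)" "B \<in> ZK (Suc p1) (Suc k1)"
    using assms(1) unfolding adm_def by blast
  have x: "\<bar>zapps A (H a b) q\<bar> \<le> Hnorm (p - p1) (k - k1) H q"
    using znorm_ge[OF h(3)] Hnorm_ge[OF assms(2,3)] by (rule order_trans)
  have y: "\<bar>zapps B (dpart g u) q\<bar> \<le> dnorm (p1 + 1) (k1 + 1) u q"
    using znorm_ge[OF h(4)] dnorm_ge[OF assms(4)] by simp (rule order_trans)
  have "\<bar>zapps A (H a b) q\<bar> * \<bar>zapps B (dpart g u) q\<bar> \<le> Hnorm (p - p1) (k - k1) H q * dnorm (p1 + 1) (k1 + 1) u q"
    using x y by (intro mult_mono) (auto simp: Hnorm_nonneg)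
  also have "\<dots> \<le> Ssum p k u H q" using Ssum_ge[OF h(1,2)] by (simp add: mult.commute)
  finally show ?thesis .
qed

lemma fev_bound: "fok p k ts \<Longrightarrow> \<exists>C\<ge>0. \<forall>u H q. q \<in> cone0 \<longrightarrow> \<bar>fev u H ts q\<bar> \<le> C / crd 0 q * Ssum p k u H q"
proof (induction ts)
  case Nil
  show ?case by (rule exI[of _ 0]) (simp add: fev_def)
next
  case (Cons x ts)
  obtain c A a b B g where xe: "x = (c,A,a,b,B,g)" by (cases x)
  have hh: "c \<in> Coef1" "a \<le> 2" "b \<le> 2" "g \<le> 2" "adm p k A B" using Cons.prems unfolding fok_def xe by auto
  have "fok p k ts" using Cons.prems unfolding fok_def by auto
  then obtain C0 where C0: "C0 \<ge> 0" "\<forall>u H q. q \<in> cone0 \<longrightarrow> \<bar>fev u H ts q\<bar> \<le> C0 / crd 0 q * Ssum p k u H q"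
    using Cons.IH by blast
  obtain M where M: "M \<ge> 0" "\<forall>q\<in>cone0. \<bar>c q\<bar> \<le> M / crd 0 q" using Coef1_bound[OF hh(1)] by blast
  have "\<bar>fev u H (x # ts) q\<bar> \<le> (M + C0) / crd 0 q * Ssum p k u H q" if q: "q \<in> cone0" for u H q
  proof -
    have t: "crd 0 q > 0" using q unfolding cone0_def by auto
    have "fev u H (x # ts) q = c q * zapps A (H a b) q * zapps B (dpart g u) q + fev u H ts q"
      unfolding fev_def xe by simp
    then have "\<bar>fev u H (x # ts) q\<bar> \<le> \<bar>c q\<bar> * (\<bar>zapps A (H a b) q\<bar> * \<bar>zapps B (dpart g u) q\<bar>) + \<bar>fev u H ts q\<bar>"
      using abs_triangle_ineq[of "c q * zapps A (H a b) q * zapps B (dpart g u) q" "fev u H ts q"]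
      by (simp add: abs_mult mult.assoc)
    also have "\<dots> \<le> M / crd 0 q * Ssum p k u H q + C0 / crd 0 q * Ssum p k u H q"
    proof (rule add_mono)
      show "\<bar>c q\<bar> * (\<bar>zapps A (H a b) q\<bar> * \<bar>zapps B (dpart g u) q\<bar>) \<le> M / crd 0 q * Ssum p k u H q"
        using M(2) q term_bound[OF hh(5) hh(2-4), of H q u] M(1) t
        by (intro mult_mono) auto
      show "\<bar>fev u H ts q\<bar> \<le> C0 / crd 0 q * Ssum p k u H q" using C0(2) q by blast
    qed
    also have "\<dots> = (M + C0) / crd 0 q * Ssum p k u H q" by (simp add: add_divide_distrib distrib_right)
    finally show ?thesis .
  qed
  then show ?case using M(1) C0(1) by (intro exI[of _ "M + C0"]) auto
qed

lemma zapps_map: "zapps (map Dz I @ map Lz J) f = dparts I (boosts J f)"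
proof (induction I)
  case Nil
  show ?case by (induction J) (auto simp: boosts_def)
next
  case (Cons a I)
  then show ?case by simp
qed

lemma Kset_cone0: "q \<in> Kset s0 s1 \<Longrightarrow> q \<in> cone0"
proof -
  assume q: "q \<in> Kset s0 s1"
  define r where "r = sqrt (crd 1 q ^ 2 + crd 2 q ^ 2)"
  have t: "crd 0 q > r + 1" using q unfolding Kset_def r_def by auto
  have r0: "r \<ge> 0" unfolding r_def by simp
  have "\<bar>crd 1 q\<bar> = sqrt (crd 1 q ^ 2)" by simp
  also have "\<dots> \<le> r" unfolding r_def by (rule real_sqrt_le_mono) simp
  finally have x1: "\<bar>crd 1 q\<bar> \<le> r" .
  have "\<bar>crd 2 q\<bar> = sqrt (crd 2 q ^ 2)" by simp
  also have "\<dots> \<le> r" unfolding r_def by (rule real_sqrt_le_mono) simp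
  finally have x2: "\<bar>crd 2 q\<bar> \<le> r" .
  show ?thesis unfolding cone0_def using t r0 x1 x2 by auto
qed

theorem lemma5p8:
  fixes I J :: "nat list"
  assumes "set I \<subseteq> {0,1,2}" and "set J \<subseteq> {1,2}"
  shows "\<exists>C::real. \<forall>s0 s1 (U::pt set) (u::fn) (H::nat \<Rightarrow> nat \<Rightarrow> fn) q.
    open U \<and> Kset s0 s1 \<subseteq> U \<and> smooth_on U u
    \<and> (\<forall>a\<le>2. \<forall>b\<le>2. smooth_on U (H a b) \<and> H a b = H b a)
    \<and> q \<in> Kset s0 s1 \<longrightarrow>
    \<bar>dparts I (boosts J (Hop H u)) q - Hop H (dparts I (boosts J u)) q\<bar>
      \<le> C / crd 0 q *
          (\<Sum>p1<length I + length J. \<Sum>k1\<le>length J.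
             dnorm (p1 + 1) (k1 + 1) u q
             * Hnorm (length I + length J - p1) (length J - k1) H q)
        + C / crd 0 q * Habs H q * dnorm (length I + length J) (length J) u q"
proof -
  define K where "K = map Dz I @ map Lz J"
  have KAZ: "set K \<subseteq> AZ" using assms unfolding K_def AZ_def by auto
  have lenK: "length K = length I + length J" unfolding K_def by simp
  have LcK: "Lc K = length J" unfolding K_def Lc_def by (simp add: comp_def)
  obtain ts where ts: "fok (length K) (Lc K) ts"
    "\<And>V u (H::nat \<Rightarrow> nat \<Rightarrow> fn). condH V u H \<Longrightarrow> eqon V (\<lambda>q. zapps K (Hop H u) q - Hop H (zapps K u) q) (fev u H ts)"
    using MainRep[OF KAZ] unfolding FRep_def by blast
  obtain C where C: "C \<ge> 0" "\<forall>u H q. q \<in> cone0 \<longrightarrow> \<bar>fev u H ts q\<bar> \<le> C / crd 0 q * Ssum (length K) (Lc K) u H q"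
    using fev_bound[OF ts(1)] by blast
  show ?thesis
  proof (rule exI[of _ C], intro allI impI, elim conjE)
    fix s0 s1 :: real and U :: "pt set" and u :: fn and H :: "nat \<Rightarrow> nat \<Rightarrow> fn" and q :: pt
    assume U: "open U" and KU: "Kset s0 s1 \<subseteq> U" and su: "smooth_on U u"
      and sH: "\<forall>a\<le>2. \<forall>b\<le>2. smooth_on U (H a b) \<and> H a b = H b a" and q: "q \<in> Kset s0 s1"
    define V where "V = U \<inter> Tpos"
    have qc: "q \<in> cone0" using Kset_cone0[OF q] .
    have qV: "q \<in> V" unfolding V_def using q KU qc cone0_Tpos by auto
    have sHV: "smooth_on V (H a b)" if "a \<le> 2" "b \<le> 2" for a b
      using sH that sm_subset[of U "H a b" V] unfolding V_def by blast
    have cH: "condH V u H" unfolding condH_def cond_def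
      using U open_Tpos sm_subset[OF su, of V] sHV unfolding V_def by auto
    have eq: "dparts I (boosts J (Hop H u)) q - Hop H (dparts I (boosts J u)) q = fev u H ts q"
      using ts(2)[OF cH] qV unfolding eqon_def K_def zapps_map by auto
    have t: "crd 0 q > 0" using qc unfolding cone0_def by auto
    have "\<bar>dparts I (boosts J (Hop H u)) q - Hop H (dparts I (boosts J u)) q\<bar> \<le> C / crd 0 q * Ssum (length K) (Lc K) u H q"
      unfolding eq using C(2)[rule_format, OF qc] .
    also have "\<dots> \<le> C / crd 0 q * Ssum (length K) (Lc K) u H q + C / crd 0 q * Habs H q * dnorm (length I + length J) (length J) u q"
      using C(1) t Habs_nonneg dnorm_nonneg by simp
    finally show "\<bar>dparts I (boosts J (Hop H u)) q - Hop H (dparts I (boosts J u)) q\<bar>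
      \<le> C / crd 0 q *
          (\<Sum>p1<length I + length J. \<Sum>k1\<le>length J.
             dnorm (p1 + 1) (k1 + 1) u q
             * Hnorm (length I + length J - p1) (length J - k1) H q)
        + C / crd 0 q * Habs H q * dnorm (length I + length J) (length J) u q"
      unfolding Ssum_def lenK LcK .
  qed
qed


end
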